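(* Let $\Omega$ be a Polish space, $\mathcal{P}$ a weakly relatively compact set of Borel probability measures on $\Omega$ (possibly non-dominated), $1\le p<\infty$, and $c_p=c_{p,\mathcal{P}}$. Then the set $\mathcal{C}$ of $\mu\in\mathcal{M}^+(c_p)$ such that $$\forall X\in L^1(c_p),\ X\ge0:\qquad \mu(X)=0\iff X=0\text{ in }L^1(c_p)$$ is non-empty and is an equivalence class of the relation $\mathcal{R}_{c_p}$ (the canonical $c_p$-class). Moreover, for every set $\{Q_n,\ n\in\mathbb{N}\}$ of Borel probability measures such that $c_p(X)=\sup_{n}E_{Q_n}(|X|^p)^{1/p}$ for all $X\in L^1(c_p)$, and every $\alpha_n>0$ with $\sum_n\alpha_n=1$, the probability measure $\sum_n\alpha_nQ_n$ belongs to this canonical $c_p$-class.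
   Context: $c_{p,\mathcal{P}}(f)=\sup_{P\in\mathcal{P}}E_P(|f|^p)^{1/p}$ for $f\in\mathcal{C}_b(\Omega)$ (a capacity), extended to all real functions by $c(f)=\sup\{c(\varphi):\varphi\in\mathcal{C}_b(\Omega),0\le\varphi\le f\}$ for $f\ge0$ lower semicontinuous and $c(g)=\inf\{c(f):f\text{ l.s.c.},f\ge|g|\}$ in general. $L^1(c_p)$ is the Banach space obtained as the quotient by $c_p$-null elements of the closure of $\mathcal{C}_b(\Omega)$ for $c_p$ in $\{g:c_p(g)<\infty\}$. Order: $X\ge0$ in $L^1(c_p)$ iff there are $f_n\in\mathcal{C}_b(\Omega)$, $f_n\ge0$, with $c_p(g-f_n)\to0$ for every representative $g$ of $X$. $\mathcal{M}^+(c_p)$ is the set of finite non-negative Borel measures $\mu$ on $\Omega$ defining an element of $L^1(c_p)^*$ (i.e. $f\mapsto\int f\,d\mu$ extends to a continuous linear form on $L^1(c_p)$, with value $\mu(X)$ at $X$). For $\mu,\nu\in\mathcal{M}^+(c_p)$, $\mu\,\mathcal{R}_{c_p}\,\nu$ iff $\{X\in L^1(c_p):X\ge0,\ \mu(X)=0\}=\{X\in L^1(c_p):X\ge0,\ \nu(X)=0\}$; this is an equivalence relation. *)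

theory Defs
  imports "HOL-Probability.Probability"
begin

definition borel_prob :: "'a::topological_space measure \<Rightarrow> bool" where
  "borel_prob P \<longleftrightarrow> sets P = sets borel \<and> prob_space P"

definition borel_finite :: "'a::topological_space measure \<Rightarrow> bool" where
  "borel_finite \<mu> \<longleftrightarrow> sets \<mu> = sets borel \<and> finite_measure \<mu>"

definition Cb :: "('a::topological_space \<Rightarrow> real) set" where
  "Cb = {f. continuous_on UNIV f \<and> bounded (range f)}"

definition weak_conv_meas :: "(nat \<Rightarrow> 'a::topological_space measure) \<Rightarrow> 'a measure \<Rightarrow> bool" where
  "weak_conv_meas Ps P \<longleftrightarrow>
     (\<forall>f\<in>Cb. (\<lambda>n. integral\<^sup>L (Ps n) f) \<longlonglongrightarrow> integral\<^sup>L P f)"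

text \<open>Weak relative compactness (for Polish spaces the weak topology on probability measures
  is metrizable, so relative compactness is relative sequential compactness).\<close>
definition weakly_rel_compact :: "'a::topological_space measure set \<Rightarrow> bool" where
  "weakly_rel_compact \<P> \<longleftrightarrow>
     (\<forall>Ps::nat \<Rightarrow> 'a measure. (\<forall>n. Ps n \<in> \<P>) \<longrightarrow>
        (\<exists>(r::nat \<Rightarrow> nat) (P::'a measure). strict_mono r \<and> borel_prob P \<and> weak_conv_meas (Ps \<circ> r) P))"

definition lsc :: "('a::topological_space \<Rightarrow> ennreal) \<Rightarrow> bool" where
  "lsc f \<longleftrightarrow> (\<forall>t. open {x. t < f x})"

definition cap_Cb :: "'a::topological_space measure set \<Rightarrow> real \<Rightarrow> ('a \<Rightarrow> real) \<Rightarrow> ennreal" where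
  "cap_Cb \<P> p f = (SUP P\<in>\<P>. ennreal ((\<integral>x. \<bar>f x\<bar> powr p \<partial>P) powr (1 / p)))"

definition cap_lsc :: "'a::topological_space measure set \<Rightarrow> real \<Rightarrow> ('a \<Rightarrow> ennreal) \<Rightarrow> ennreal" where
  "cap_lsc \<P> p f = (SUP \<phi>\<in>{\<phi>\<in>Cb. \<forall>x. 0 \<le> \<phi> x \<and> ennreal (\<phi> x) \<le> f x}. cap_Cb \<P> p \<phi>)"

definition cap :: "'a::topological_space measure set \<Rightarrow> real \<Rightarrow> ('a \<Rightarrow> real) \<Rightarrow> ennreal" where
  "cap \<P> p g = (INF f\<in>{f. lsc f \<and> (\<forall>x. ennreal \<bar>g x\<bar> \<le> f x)}. cap_lsc \<P> p f)"

section \<open>L^1(c_p), represented by representatives\<close>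

definition L1cap :: "'a::topological_space measure set \<Rightarrow> real \<Rightarrow> ('a \<Rightarrow> real) set" where
  "L1cap \<P> p = {g. cap \<P> p g < \<infinity> \<and> (\<forall>e>0. \<exists>\<phi>\<in>Cb. cap \<P> p (\<lambda>x. g x - \<phi> x) < ennreal e)}"

definition L1eq :: "'a::topological_space measure set \<Rightarrow> real \<Rightarrow> ('a \<Rightarrow> real) \<Rightarrow> ('a \<Rightarrow> real) \<Rightarrow> bool" where
  "L1eq \<P> p g h \<longleftrightarrow> cap \<P> p (\<lambda>x. g x - h x) = 0"

definition L1nonneg :: "'a::topological_space measure set \<Rightarrow> real \<Rightarrow> ('a \<Rightarrow> real) \<Rightarrow> bool" where
  "L1nonneg \<P> p g \<longleftrightarrow>
     (\<forall>h\<in>L1cap \<P> p. L1eq \<P> p g h \<longrightarrow>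
        (\<exists>fs. (\<forall>n. fs n \<in> Cb \<and> (\<forall>x. 0 \<le> fs n x)) \<and>
              (\<lambda>n. cap \<P> p (\<lambda>x. h x - fs n x)) \<longlonglongrightarrow> 0))"

text \<open>M^+(c_p): finite non-negative Borel measures whose integral is c_p-continuous on Cb
  (hence extends uniquely to a continuous linear form on L^1(c_p)).\<close>
definition Mplus :: "'a::topological_space measure set \<Rightarrow> real \<Rightarrow> 'a measure set" where
  "Mplus \<P> p = {\<mu>. borel_finite \<mu> \<and>
     (\<exists>C::real. \<forall>\<phi>\<in>Cb. ennreal \<bar>integral\<^sup>L \<mu> \<phi>\<bar> \<le> ennreal C * cap \<P> p \<phi>)}"

text \<open>The value mu(X) of the continuous extension at (a representative g of) X.\<close>
definition ext_val :: "'a::topological_space measure set \<Rightarrow> real \<Rightarrow> 'a measure \<Rightarrow> ('a \<Rightarrow> real) \<Rightarrow> real" where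
  "ext_val \<P> p \<mu> g = (THE v. \<forall>e>0. \<exists>d>0. \<forall>\<phi>\<in>Cb.
       cap \<P> p (\<lambda>x. g x - \<phi> x) < ennreal d \<longrightarrow> \<bar>integral\<^sup>L \<mu> \<phi> - v\<bar> < e)"

definition Rcap :: "'a::topological_space measure set \<Rightarrow> real \<Rightarrow> 'a measure \<Rightarrow> 'a measure \<Rightarrow> bool" where
  "Rcap \<P> p \<mu> \<nu> \<longleftrightarrow>
     {g\<in>L1cap \<P> p. L1nonneg \<P> p g \<and> ext_val \<P> p \<mu> g = 0} =
     {g\<in>L1cap \<P> p. L1nonneg \<P> p g \<and> ext_val \<P> p \<nu> g = 0}"

definition canon_class :: "'a::topological_space measure set \<Rightarrow> real \<Rightarrow> 'a measure set" where
  "canon_class \<P> p = {\<mu>\<in>Mplus \<P> p. \<forall>g\<in>L1cap \<P> p. L1nonneg \<P> p g \<longrightarrow>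
       (ext_val \<P> p \<mu> g = 0 \<longleftrightarrow> cap \<P> p g = 0)}"

definition epowr :: "ennreal \<Rightarrow> real \<Rightarrow> ennreal" where
  "epowr t r = (if t = \<infinity> then \<infinity> else ennreal (enn2real t powr r))"

definition mixture :: "(nat \<Rightarrow> real) \<Rightarrow> (nat \<Rightarrow> 'a::topological_space measure) \<Rightarrow> 'a measure" where
  "mixture \<alpha> Q = measure_of UNIV (sets borel) (\<lambda>A. \<Sum>n. ennreal (\<alpha> n) * emeasure (Q n) A)"

end

theory Submission
  imports Defs
begin


definition nrm :: "'a measure \<Rightarrow> real \<Rightarrow> ('a \<Rightarrow> real) \<Rightarrow> real" where
  "nrm P p f = (\<integral>x. \<bar>f x\<bar> powr p \<partial>P) powr (1/p)"

lemma Cb_cont: "f \<in> Cb \<Longrightarrow> continuous_on UNIV f"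
  by (simp add: Cb_def)

lemma Cb_bdd: "f \<in> Cb \<Longrightarrow> \<exists>B. \<forall>x. \<bar>f x\<bar> \<le> B"
  unfolding Cb_def bounded_iff by auto

lemma Cb_I: "continuous_on UNIV f \<Longrightarrow> (\<And>x. \<bar>f x\<bar> \<le> B) \<Longrightarrow> f \<in> Cb"
  unfolding Cb_def bounded_iff by auto

lemma Cb_const[simp]: "(\<lambda>x. c) \<in> Cb"
  by (rule Cb_I[where B="\<bar>c\<bar>"]) (auto intro: continuous_intros)

lemma Cb_add: "f \<in> Cb \<Longrightarrow> g \<in> Cb \<Longrightarrow> (\<lambda>x. f x + g x) \<in> Cb"
proof -
  assume f: "f \<in> Cb" and g: "g \<in> Cb"
  obtain A where A: "\<forall>x. \<bar>f x\<bar> \<le> A" using Cb_bdd[OF f] by auto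
  obtain B where B: "\<forall>x. \<bar>g x\<bar> \<le> B" using Cb_bdd[OF g] by auto
  show ?thesis
    by (rule Cb_I[where B="A+B"]) (use A B f g Cb_cont in \<open>auto intro!: continuous_intros abs_triangle_ineq[THEN order_trans] add_mono\<close>)
qed

lemma Cb_uminus: "f \<in> Cb \<Longrightarrow> (\<lambda>x. - f x) \<in> Cb"
proof -
  assume f: "f \<in> Cb"
  obtain A where A: "\<forall>x. \<bar>f x\<bar> \<le> A" using Cb_bdd[OF f] by auto
  show ?thesis
    by (rule Cb_I[where B="A"]) (use A f Cb_cont in \<open>auto intro!: continuous_intros\<close>)
qed

lemma Cb_diff: "f \<in> Cb \<Longrightarrow> g \<in> Cb \<Longrightarrow> (\<lambda>x. f x - g x) \<in> Cb"
  using Cb_add[OF _ Cb_uminus, of f g] by simp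

lemma Cb_abs: "f \<in> Cb \<Longrightarrow> (\<lambda>x. \<bar>f x\<bar>) \<in> Cb"
proof -
  assume f: "f \<in> Cb"
  obtain A where A: "\<forall>x. \<bar>f x\<bar> \<le> A" using Cb_bdd[OF f] by auto
  show ?thesis
    by (rule Cb_I[where B="A"]) (use A f Cb_cont in \<open>auto intro!: continuous_intros\<close>)
qed

lemma Cb_min: "f \<in> Cb \<Longrightarrow> g \<in> Cb \<Longrightarrow> (\<lambda>x. min (f x) (g x)) \<in> Cb"
proof -
  assume f: "f \<in> Cb" and g: "g \<in> Cb"
  obtain A where A: "\<forall>x. \<bar>f x\<bar> \<le> A" using Cb_bdd[OF f] by auto
  obtain B where B: "\<forall>x. \<bar>g x\<bar> \<le> B" using Cb_bdd[OF g] by auto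
  show ?thesis
  proof (rule Cb_I[where B="A+B"])
    show "continuous_on UNIV (\<lambda>x. min (f x) (g x))" using f g Cb_cont by (auto intro!: continuous_intros)
    show "\<bar>min (f x) (g x)\<bar> \<le> A + B" for x using A[rule_format, of x] B[rule_format, of x] by (auto simp: abs_le_iff min_def)
  qed
qed

lemma Cb_max: "f \<in> Cb \<Longrightarrow> g \<in> Cb \<Longrightarrow> (\<lambda>x. max (f x) (g x)) \<in> Cb"
proof -
  assume f: "f \<in> Cb" and g: "g \<in> Cb"
  obtain A where A: "\<forall>x. \<bar>f x\<bar> \<le> A" using Cb_bdd[OF f] by auto
  obtain B where B: "\<forall>x. \<bar>g x\<bar> \<le> B" using Cb_bdd[OF g] by auto
  show ?thesis
  proof (rule Cb_I[where B="A+B"])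
    show "continuous_on UNIV (\<lambda>x. max (f x) (g x))" using f g Cb_cont by (auto intro!: continuous_intros)
    show "\<bar>max (f x) (g x)\<bar> \<le> A + B" for x using A[rule_format, of x] B[rule_format, of x] by (auto simp: abs_le_iff max_def)
  qed
qed

lemma Cb_powr: "f \<in> Cb \<Longrightarrow> 0 < p \<Longrightarrow> (\<lambda>x. \<bar>f x\<bar> powr p) \<in> Cb"
proof -
  assume f: "f \<in> Cb" and p: "0 < p"
  obtain A where A: "\<forall>x. \<bar>f x\<bar> \<le> A" using Cb_bdd[OF f] by auto
  show ?thesis
  proof (rule Cb_I[where B="A powr p"])
    show "continuous_on UNIV (\<lambda>x. \<bar>f x\<bar> powr p)"
      using p by (intro continuous_on_powr' continuous_intros Cb_cont[OF f]) auto
    show "\<bar>\<bar>f x\<bar> powr p\<bar> \<le> A powr p" for x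
      using A p by (auto intro!: powr_mono2)
  qed
qed

lemma Cb_meas: "f \<in> Cb \<Longrightarrow> sets M = sets borel \<Longrightarrow> f \<in> borel_measurable M"
  using measurable_cong_sets[OF _ refl, of M borel] borel_measurable_continuous_onI Cb_cont by blast

lemma Cb_int: "f \<in> Cb \<Longrightarrow> borel_finite M \<Longrightarrow> integrable M f"
proof -
  assume f: "f \<in> Cb" and M: "borel_finite M"
  obtain A where A: "\<forall>x. \<bar>f x\<bar> \<le> A" using Cb_bdd[OF f] by auto
  interpret finite_measure M using M by (simp add: borel_finite_def)
  show ?thesis
    using A M Cb_meas[OF f] by (intro integrable_const_bound[where B=A]) (auto simp: borel_finite_def)
qed

lemma bp_bf: "borel_prob P \<Longrightarrow> borel_finite P"
  by (simp add: borel_prob_def borel_finite_def prob_space_def)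



lemma nrm_nonneg[simp]: "0 \<le> nrm P p f"
  by (simp add: nrm_def)

lemma int_pow_nonneg: fixes f :: "'a \<Rightarrow> real" shows "0 \<le> (\<integral>x. \<bar>f x\<bar> powr p \<partial>P)"
  by (rule integral_nonneg_AE) auto

lemma Cb_int_pow: "f \<in> Cb \<Longrightarrow> borel_prob P \<Longrightarrow> 0 < p \<Longrightarrow> integrable P (\<lambda>x. \<bar>f x\<bar> powr p)"
  using Cb_int[OF Cb_powr bp_bf] by blast

lemma nrm_mono:
  assumes "borel_prob P" "f \<in> Cb" "g \<in> Cb" "0 < p" "\<And>x. \<bar>f x\<bar> \<le> \<bar>g x\<bar>"
  shows "nrm P p f \<le> nrm P p g"
  unfolding nrm_def
proof (rule powr_mono2)
  show "(\<integral>x. \<bar>f x\<bar> powr p \<partial>P) \<le> (\<integral>x. \<bar>g x\<bar> powr p \<partial>P)"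
    using assms by (intro integral_mono Cb_int_pow powr_mono2) auto
qed (use assms in \<open>auto intro: int_pow_nonneg\<close>)

lemma nrm_le_const:
  assumes "borel_prob P" "f \<in> Cb" "0 < p" "\<And>x. \<bar>f x\<bar> \<le> B"
  shows "nrm P p f \<le> B"
proof -
  interpret prob_space P using assms(1) by (simp add: borel_prob_def)
  have B: "0 \<le> B" using assms(4)[of undefined] by linarith
  have "(\<integral>x. \<bar>f x\<bar> powr p \<partial>P) \<le> (\<integral>x. B powr p \<partial>P)"
    using assms by (intro integral_mono Cb_int_pow powr_mono2) auto
  also have "\<dots> = B powr p" by (simp add: prob_space)
  finally have "nrm P p f \<le> (B powr p) powr (1/p)"
    unfolding nrm_def using assms by (intro powr_mono2) (auto intro: int_pow_nonneg)
  also have "\<dots> = B" using B assms by (simp add: powr_powr)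
  finally show ?thesis .
qed

lemma nrm_zero_AE:
  assumes "borel_prob P" "f \<in> Cb" "0 < p" "nrm P p f = 0"
  shows "AE x in P. f x = 0"
proof -
  have "(\<integral>x. \<bar>f x\<bar> powr p \<partial>P) = 0" using assms(4) int_pow_nonneg[where f=f and p=p and P=P] by (simp add: nrm_def)
  then have "AE x in P. \<bar>f x\<bar> powr p = 0"
    using assms by (subst integral_nonneg_eq_0_iff_AE[symmetric]) (auto intro: Cb_int_pow)
  then show ?thesis by eventually_elim simp
qed

lemma conv_pow:
  fixes x y t p :: real
  assumes "0 \<le> x" "0 \<le> y" "0 \<le> t" "t \<le> 1" "1 \<le> p"
  shows "(t*x + (1-t)*y) powr p \<le> t * x powr p + (1-t) * y powr p"
proof (cases "x = 0 \<or> y = 0")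
  case True
  have aux: "c powr p \<le> c" if "0 \<le> c" "c \<le> 1" for c :: real
  proof (cases "c = 0")
    case False
    then have "c powr p \<le> c powr 1" using that assms by (intro powr_mono') auto
    then show ?thesis using that by simp
  qed simp
  show ?thesis
  proof (cases "x = 0")
    case True
    have "((1-t)*y) powr p = (1-t) powr p * y powr p" using assms by (simp add: powr_mult)
    also have "\<dots> \<le> (1-t) * y powr p" using aux[of "1-t"] assms by (intro mult_right_mono) auto
    finally show ?thesis using True by simp
  next
    case False
    with \<open>x = 0 \<or> y = 0\<close> have y: "y = 0" by auto
    have "(t*x) powr p = t powr p * x powr p" using assms by (simp add: powr_mult)
    also have "\<dots> \<le> t * x powr p" using aux[of "t"] assms by (intro mult_right_mono) auto
    finally show ?thesis using y by simp
  qed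
next
  case False
  then have "x \<in> {0<..}" "y \<in> {0<..}" using assms by auto
  from convex_onD[OF powr_convex[OF assms(5)], of t y x] this assms
  show ?thesis by (auto simp: algebra_simps)
qed

lemma nrm_triangle:
  assumes P: "borel_prob P" and f: "f \<in> Cb" and g: "g \<in> Cb" and p: "1 \<le> p"
  shows "nrm P p (\<lambda>x. f x + g x) \<le> nrm P p f + nrm P p g"
proof -
  interpret prob_space P using P by (simp add: borel_prob_def)
  have p0: "0 < p" using p by simp
  define I where "I h = (\<integral>x. \<bar>h x\<bar> powr p \<partial>P)" for h :: "'a \<Rightarrow> real"
  have Inn: "0 \<le> I h" for h unfolding I_def by (rule int_pow_nonneg)
  define a where "a = nrm P p f"
  define b where "b = nrm P p g"
  have Ia: "I f = a powr p" unfolding a_def nrm_def I_def[symmetric] using Inn[of f] p by (simp add: powr_powr)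
  have Ib: "I g = b powr p" unfolding b_def nrm_def I_def[symmetric] using Inn[of g] p by (simp add: powr_powr)
  have fg: "(\<lambda>x. f x + g x) \<in> Cb" using f g by (rule Cb_add)
  show ?thesis
  proof (cases "a = 0 \<or> b = 0")
    case True
    show ?thesis
    proof (cases "a = 0")
      case True
      have "AE x in P. f x = 0" using nrm_zero_AE[OF P f p0] True a_def by simp
      then have "AE x in P. \<bar>f x + g x\<bar> powr p = \<bar>g x\<bar> powr p" by eventually_elim simp
      then have "(\<integral>x. \<bar>f x + g x\<bar> powr p \<partial>P) = (\<integral>x. \<bar>g x\<bar> powr p \<partial>P)"
        using P p0 by (intro integral_cong_AE Cb_meas Cb_powr fg g) (auto simp: borel_prob_def)
      then have "nrm P p (\<lambda>x. f x + g x) = nrm P p g" unfolding nrm_def by simp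
      then show ?thesis using True a_def by simp
    next
      case False
      then have "b = 0" using \<open>a = 0 \<or> b = 0\<close> by simp
      have "AE x in P. g x = 0" using nrm_zero_AE[OF P g p0] \<open>b = 0\<close> b_def by simp
      then have "AE x in P. \<bar>f x + g x\<bar> powr p = \<bar>f x\<bar> powr p" by eventually_elim simp
      then have "(\<integral>x. \<bar>f x + g x\<bar> powr p \<partial>P) = (\<integral>x. \<bar>f x\<bar> powr p \<partial>P)"
        using P p0 by (intro integral_cong_AE Cb_meas Cb_powr fg f) (auto simp: borel_prob_def)
      then have "nrm P p (\<lambda>x. f x + g x) = nrm P p f" unfolding nrm_def by simp
      then show ?thesis using \<open>b = 0\<close> b_def by simp
    qed
  next
    case False
    then have a: "0 < a" and b: "0 < b" unfolding a_def b_def using nrm_nonneg[of P p] by (auto simp: order.order_iff_strict)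
    define s where "s = a + b"
    have s: "0 < s" using a b s_def by simp
    define t where "t = a / s"
    have t: "0 \<le> t" "t \<le> 1" "1 - t = b / s" using a b s unfolding t_def s_def by (auto simp: field_simps)
    have pt: "\<bar>f x + g x\<bar> powr p \<le> s powr p * (t * (\<bar>f x\<bar> powr p / a powr p) + (1 - t) * (\<bar>g x\<bar> powr p / b powr p))" for x
    proof -
      have "\<bar>f x + g x\<bar> powr p \<le> (\<bar>f x\<bar> + \<bar>g x\<bar>) powr p" using p by (intro powr_mono2) auto
      also have "\<bar>f x\<bar> + \<bar>g x\<bar> = s * (t * (\<bar>f x\<bar> / a) + (1 - t) * (\<bar>g x\<bar> / b))"
      proof -
        have st: "s * t = a" "s * (1 - t) = b" using t(3) s unfolding t_def by auto
        have "s * (t * (\<bar>f x\<bar> / a) + (1 - t) * (\<bar>g x\<bar> / b)) = (s*t) * (\<bar>f x\<bar> / a) + (s*(1-t)) * (\<bar>g x\<bar> / b)"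
          by (simp add: algebra_simps)
        also have "\<dots> = \<bar>f x\<bar> + \<bar>g x\<bar>" unfolding st using a b by simp
        finally show ?thesis by simp
      qed
      also have "(s * (t * (\<bar>f x\<bar> / a) + (1 - t) * (\<bar>g x\<bar> / b))) powr p
          = s powr p * (t * (\<bar>f x\<bar> / a) + (1 - t) * (\<bar>g x\<bar> / b)) powr p"
        using s t a b by (simp add: powr_mult)
      also have "(t * (\<bar>f x\<bar> / a) + (1 - t) * (\<bar>g x\<bar> / b)) powr p \<le> t * (\<bar>f x\<bar> / a) powr p + (1 - t) * (\<bar>g x\<bar> / b) powr p"
        using a b t p by (intro conv_pow) auto
      also have "(\<bar>f x\<bar> / a) powr p = \<bar>f x\<bar> powr p / a powr p" using a by (simp add: powr_divide)
      also have "(\<bar>g x\<bar> / b) powr p = \<bar>g x\<bar> powr p / b powr p" using b by (simp add: powr_divide)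
      finally show ?thesis using s by (simp add: mult_left_mono)
    qed
    have "I (\<lambda>x. f x + g x) \<le> (\<integral>x. s powr p * (t * (\<bar>f x\<bar> powr p / a powr p) + (1 - t) * (\<bar>g x\<bar> powr p / b powr p)) \<partial>P)"
      unfolding I_def using pt Cb_int_pow[OF f P p0] Cb_int_pow[OF g P p0] Cb_int_pow[OF fg P p0]
      by (intro integral_mono) auto
    also have "\<dots> = s powr p * (t * (I f / a powr p) + (1 - t) * (I g / b powr p))"
      unfolding I_def using Cb_int_pow[OF f P p0] Cb_int_pow[OF g P p0] by simp
    also have "\<dots> = s powr p" using Ia Ib a b t by (simp add: field_simps)
    finally have "I (\<lambda>x. f x + g x) \<le> s powr p" .
    then have "nrm P p (\<lambda>x. f x + g x) \<le> (s powr p) powr (1/p)"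
      unfolding nrm_def I_def[symmetric] using Inn p by (intro powr_mono2) auto
    also have "\<dots> = s" using s p by (simp add: powr_powr)
    finally show ?thesis using s_def a_def b_def by simp
  qed
qed

lemma int_abs_le_nrm:
  assumes P: "borel_prob P" and f: "f \<in> Cb" and p: "1 \<le> p"
  shows "(\<integral>x. \<bar>f x\<bar> \<partial>P) \<le> nrm P p f"
proof -
  interpret prob_space P using P by (simp add: borel_prob_def)
  have p0: "0 < p" using p by simp
  define a where "a = nrm P p f"
  have Inn: "0 \<le> (\<integral>x. \<bar>f x\<bar> powr p \<partial>P)" by (rule int_pow_nonneg)
  have Ia: "(\<integral>x. \<bar>f x\<bar> powr p \<partial>P) = a powr p" unfolding a_def nrm_def using Inn p by (simp add: powr_powr)
  show ?thesis
  proof (cases "p = 1")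
    case True
    then show ?thesis by (simp add: nrm_def)
  next
    case False
    then have p1: "1 < p" using p by simp
    show ?thesis
    proof (cases "a = 0")
      case True
      have "AE x in P. f x = 0" using nrm_zero_AE[OF P f p0] True a_def by simp
      then have "(\<integral>x. \<bar>f x\<bar> \<partial>P) = (\<integral>x. 0 \<partial>P)" using P by (intro integral_cong_AE Cb_meas Cb_abs f) (auto simp: borel_prob_def)
      then show ?thesis using a_def by simp
    next
      case False
      then have a: "0 < a" using a_def nrm_nonneg[of P p f] by linarith
      define q where "q = p / (p - 1)"
      have q: "1 < q" "1/p + 1/q = 1" using p1 unfolding q_def by (auto simp: field_simps)
      have pt: "\<bar>f x\<bar> / a \<le> (\<bar>f x\<bar> powr p / a powr p) / p + 1 / q" for x
      proof -
        have "\<bar>f x\<bar> / a * 1 \<le> (\<bar>f x\<bar> / a) powr p / p + 1 powr q / q"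
          using a p1 q by (intro Youngs_inequality) auto
        then show ?thesis using a by (simp add: powr_divide)
      qed
      have "(\<integral>x. \<bar>f x\<bar> / a \<partial>P) \<le> (\<integral>x. (\<bar>f x\<bar> powr p / a powr p) / p + 1 / q \<partial>P)"
        using pt Cb_int_pow[OF f P p0] Cb_int[OF Cb_abs[OF f] bp_bf[OF P]]
        by (intro integral_mono) auto
      also have "\<dots> = ((\<integral>x. \<bar>f x\<bar> powr p \<partial>P) / a powr p) / p + 1 / q"
        using Cb_int_pow[OF f P p0] by (simp add: prob_space)
      also have "\<dots> = 1" using Ia a q by simp
      finally have "(\<integral>x. \<bar>f x\<bar> \<partial>P) / a \<le> 1" by simp
      then show ?thesis using a a_def by (simp add: field_simps)
    qed
  qed
qed



lemma cap_Cb_eq: "cap_Cb \<P> p f = (SUP P\<in>\<P>. ennreal (nrm P p f))"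
  by (simp add: cap_Cb_def nrm_def)

lemma cap_Cb_ge: "P \<in> \<P> \<Longrightarrow> ennreal (nrm P p f) \<le> cap_Cb \<P> p f"
  unfolding cap_Cb_eq by (rule SUP_upper)

lemma cap_Cb_mono:
  assumes "\<forall>P\<in>\<P>. borel_prob P" "f \<in> Cb" "g \<in> Cb" "0 < p" "\<And>x. \<bar>f x\<bar> \<le> \<bar>g x\<bar>"
  shows "cap_Cb \<P> p f \<le> cap_Cb \<P> p g"
  unfolding cap_Cb_eq
proof (rule SUP_mono)
  fix P assume "P \<in> \<P>"
  then show "\<exists>m\<in>\<P>. ennreal (nrm P p f) \<le> ennreal (nrm m p g)"
    using assms by (intro bexI[of _ P] ennreal_leI nrm_mono) auto
qed

lemma cap_Cb_bound:
  assumes "\<forall>P\<in>\<P>. borel_prob P" "f \<in> Cb" "0 < p" "\<And>x. \<bar>f x\<bar> \<le> B"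
  shows "cap_Cb \<P> p f \<le> ennreal B"
  unfolding cap_Cb_eq using assms by (intro SUP_least ennreal_leI nrm_le_const) auto

lemma cap_Cb_fin:
  assumes "\<forall>P\<in>\<P>. borel_prob P" "f \<in> Cb" "0 < p"
  shows "cap_Cb \<P> p f < \<infinity>"
proof -
  obtain B where "\<forall>x. \<bar>f x\<bar> \<le> B" using Cb_bdd[OF assms(2)] by auto
  then have "cap_Cb \<P> p f \<le> ennreal B" using assms by (intro cap_Cb_bound) auto
  then show ?thesis using le_less_trans by fastforce
qed

lemma cap_Cb_abs: "cap_Cb \<P> p (\<lambda>x. \<bar>f x\<bar>) = cap_Cb \<P> p f"
  by (simp add: cap_Cb_def)

lemma cap_Cb_triangle:
  assumes "\<forall>P\<in>\<P>. borel_prob P" "f \<in> Cb" "g \<in> Cb" "1 \<le> p"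
  shows "cap_Cb \<P> p (\<lambda>x. f x + g x) \<le> cap_Cb \<P> p f + cap_Cb \<P> p g"
  unfolding cap_Cb_eq
proof (intro SUP_least)
  fix P assume P: "P \<in> \<P>"
  have "ennreal (nrm P p (\<lambda>x. f x + g x)) \<le> ennreal (nrm P p f + nrm P p g)"
    using assms P by (intro ennreal_leI nrm_triangle) auto
  also have "\<dots> = ennreal (nrm P p f) + ennreal (nrm P p g)" by (simp add: ennreal_plus)
  also have "\<dots> \<le> (SUP P\<in>\<P>. ennreal (nrm P p f)) + (SUP P\<in>\<P>. ennreal (nrm P p g))"
    using P by (intro add_mono SUP_upper)
  finally show "ennreal (nrm P p (\<lambda>x. f x + g x)) \<le> (SUP P\<in>\<P>. ennreal (nrm P p f)) + (SUP P\<in>\<P>. ennreal (nrm P p g))" .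
qed

lemma cap_Cb_zero: "cap_Cb \<P> p (\<lambda>x. 0) = 0"
  by (auto simp: cap_Cb_def intro!: antisym SUP_least)

lemma lsc_cont: "continuous_on UNIV h \<Longrightarrow> lsc (\<lambda>x. ennreal (h x))"
  unfolding lsc_def
proof
  fix t :: ennreal assume h: "continuous_on UNIV h"
  show "open {x. t < ennreal (h x)}"
  proof (cases t rule: ennreal_cases)
    case (real r)
    have "{x. t < ennreal (h x)} = {x. r < h x}"
      using real by (auto simp: ennreal_less_iff ennreal_lessI)
    also have "open \<dots>" using h by (intro open_Collect_less continuous_intros) auto
    finally show ?thesis .
  qed simp
qed

lemma lsc_infty: "lsc (\<lambda>x. \<infinity>)"
  unfolding lsc_def by (auto intro: open_empty)

lemma cap_le_lsc: "lsc f \<Longrightarrow> (\<And>x. ennreal \<bar>g x\<bar> \<le> f x) \<Longrightarrow> cap \<P> p g \<le> cap_lsc \<P> p f"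
  unfolding cap_def by (rule INF_lower) auto

lemma cap_lsc_ge: "\<phi> \<in> Cb \<Longrightarrow> (\<And>x. 0 \<le> \<phi> x) \<Longrightarrow> (\<And>x. ennreal (\<phi> x) \<le> f x) \<Longrightarrow> cap_Cb \<P> p \<phi> \<le> cap_lsc \<P> p f"
  unfolding cap_lsc_def by (rule SUP_upper) auto

lemma cap_eq_Cb:
  assumes "\<forall>P\<in>\<P>. borel_prob P" "\<phi> \<in> Cb" "0 < p"
  shows "cap \<P> p \<phi> = cap_Cb \<P> p \<phi>"
proof (rule antisym)
  have l: "lsc (\<lambda>x. ennreal \<bar>\<phi> x\<bar>)" using Cb_cont[OF assms(2)] by (intro lsc_cont continuous_intros)
  have "cap \<P> p \<phi> \<le> cap_lsc \<P> p (\<lambda>x. ennreal \<bar>\<phi> x\<bar>)" by (rule cap_le_lsc[OF l]) simp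
  also have "\<dots> \<le> cap_Cb \<P> p \<phi>"
    unfolding cap_lsc_def
  proof (intro SUP_least)
    fix \<psi> assume "\<psi> \<in> {\<psi> \<in> Cb. \<forall>x. 0 \<le> \<psi> x \<and> ennreal (\<psi> x) \<le> ennreal \<bar>\<phi> x\<bar>}"
    then have \<psi>: "\<psi> \<in> Cb" "\<And>x. 0 \<le> \<psi> x" "\<And>x. \<psi> x \<le> \<bar>\<phi> x\<bar>" by (auto simp: ennreal_le_iff)
    show "cap_Cb \<P> p \<psi> \<le> cap_Cb \<P> p \<phi>" using assms \<psi> by (intro cap_Cb_mono) auto
  qed
  finally show "cap \<P> p \<phi> \<le> cap_Cb \<P> p \<phi>" .
next
  show "cap_Cb \<P> p \<phi> \<le> cap \<P> p \<phi>"
    unfolding cap_def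
  proof (intro INF_greatest)
    fix f assume "f \<in> {f. lsc f \<and> (\<forall>x. ennreal \<bar>\<phi> x\<bar> \<le> f x)}"
    then have "\<And>x. ennreal \<bar>\<phi> x\<bar> \<le> f x" by auto
    then have "cap_Cb \<P> p (\<lambda>x. \<bar>\<phi> x\<bar>) \<le> cap_lsc \<P> p f" using assms by (intro cap_lsc_ge Cb_abs) auto
    then show "cap_Cb \<P> p \<phi> \<le> cap_lsc \<P> p f" by (simp add: cap_Cb_abs)
  qed
qed

lemma cap_mono: "(\<And>x. \<bar>g x\<bar> \<le> \<bar>h x\<bar>) \<Longrightarrow> cap \<P> p g \<le> cap \<P> p h"
  unfolding cap_def by (rule INF_superset_mono) (auto intro: order_trans[OF ennreal_leI])

lemma cap_abs_eq: "(\<And>x. \<bar>g x\<bar> = \<bar>h x\<bar>) \<Longrightarrow> cap \<P> p g = cap \<P> p h"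
  by (rule antisym; rule cap_mono) auto

lemma cap_minus_sym: "cap \<P> p (\<lambda>x. g x - h x) = cap \<P> p (\<lambda>x. h x - g x)"
  by (rule cap_abs_eq) auto

lemma cap_zero: fixes \<P> :: "'a::topological_space measure set" shows "cap \<P> p (\<lambda>x. 0) = 0"
proof -
  have "cap \<P> p (\<lambda>x. 0) \<le> cap_lsc \<P> p (\<lambda>x. 0)"
    using lsc_cont[of "\<lambda>x. 0"] by (intro cap_le_lsc) auto
  also have "cap_lsc \<P> p (\<lambda>x. 0) = 0"
    unfolding cap_lsc_def
  proof (intro antisym SUP_least)
    fix \<psi> :: "'a \<Rightarrow> real" assume "\<psi> \<in> {\<psi> \<in> Cb. \<forall>x. 0 \<le> \<psi> x \<and> ennreal (\<psi> x) \<le> 0}"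
    then have "\<psi> = (\<lambda>x. 0)" by (auto simp: fun_eq_iff ennreal_eq_0_iff intro: antisym)
    then show "cap_Cb \<P> p \<psi> \<le> 0" by (simp add: cap_Cb_zero)
  qed simp
  finally show ?thesis by simp
qed

lemma cap_ge_nrm:
  assumes "\<forall>P\<in>\<P>. borel_prob P" "\<phi> \<in> Cb" "0 < p" "P \<in> \<P>"
  shows "ennreal (nrm P p \<phi>) \<le> cap \<P> p \<phi>"
  using cap_Cb_ge[OF assms(4)] cap_eq_Cb[OF assms(1-3)] by simp



lemma lsc_SUP: "(\<And>k. lsc (h k)) \<Longrightarrow> lsc (\<lambda>x. SUP k. h k x)"
  unfolding lsc_def
proof
  fix t assume "\<And>k. \<forall>t. open {x. t < h k x}"
  then have "open (\<Union>k. {x. t < h k x})" by auto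
  moreover have "{x. t < (SUP k. h k x)} = (\<Union>k. {x. t < h k x})" by (auto simp: less_SUP_iff)
  ultimately show "open {x. t < (SUP k. h k x)}" by simp
qed

lemma lsc_approx:
  fixes f :: "'a::metric_space \<Rightarrow> ennreal"
  assumes "lsc f"
  obtains \<psi> where "\<And>k. \<psi> k \<in> Cb" "\<And>k x. 0 \<le> \<psi> k x" "\<And>k x. ennreal (\<psi> k x) \<le> f x"
    "\<And>x. incseq (\<lambda>k. \<psi> k x)" "\<And>x. (SUP k. ennreal (\<psi> k x)) = f x"
proof -
  define h where "h k y = enn2real (min (f y) (of_nat k))" for k :: nat and y
  have hk: "ennreal (h k y) = min (f y) (of_nat k)" for k y
  proof -
    have "min (f y) (of_nat k) < top" by (metis min.cobounded2 le_less_trans of_nat_less_top)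
    then show ?thesis unfolding h_def by (subst ennreal_enn2real) (auto simp: less_top)
  qed
  have h0: "0 \<le> h k y" for k y unfolding h_def by simp
  have hle: "h k y \<le> real k" for k y
    using hk[of k y] by (metis ennreal_le_iff ennreal_of_nat_eq_real_of_nat min.cobounded2 of_nat_0_le_iff)
  have hmono: "h k y \<le> h k' y" if "k \<le> k'" for k k' y
  proof -
    have "ennreal (h k y) \<le> ennreal (h k' y)" unfolding hk using that by (intro min.mono order_refl) simp
    then show ?thesis using h0 by (simp add: ennreal_le_iff)
  qed
  define \<psi> where "\<psi> k x = Inf (range (\<lambda>y. h k y + real k * dist x y))" for k :: nat and x
  have bdd: "bdd_below (range (\<lambda>y. h k y + real k * dist x y))" for k x
    by (rule bdd_belowI[where m=0]) (auto intro: add_nonneg_nonneg h0)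
  have psi_le: "\<psi> k x \<le> h k y + real k * dist x y" for k x y
    unfolding \<psi>_def by (rule cInf_lower) (use bdd in auto)
  have psi_ge: "c \<le> \<psi> k x" if "\<And>y. c \<le> h k y + real k * dist x y" for c k x
    unfolding \<psi>_def by (rule cInf_greatest) (use that in auto)
  have psi0: "0 \<le> \<psi> k x" for k x by (rule psi_ge) (auto intro: add_nonneg_nonneg h0)
  have psih: "\<psi> k x \<le> h k x" for k x using psi_le[of k x x] by simp
  have lip: "\<psi> k x \<le> \<psi> k x' + real k * dist x x'" for k x x'
  proof -
    have "\<psi> k x - real k * dist x x' \<le> \<psi> k x'"
    proof (rule psi_ge)
      fix y
      have "\<psi> k x \<le> h k y + real k * dist x y" by (rule psi_le)
      also have "dist x y \<le> dist x x' + dist x' y" by (rule dist_triangle)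
      then have "real k * dist x y \<le> real k * dist x x' + real k * dist x' y"
        by (metis distrib_left mult_left_mono of_nat_0_le_iff)
      finally show "\<psi> k x - real k * dist x x' \<le> h k y + real k * dist x' y" by simp
    qed
    then show ?thesis by simp
  qed
  have cont: "continuous_on UNIV (\<psi> k)" for k
  proof (rule lipschitz_on_continuous_on)
    show "(real k)-lipschitz_on UNIV (\<psi> k)"
    proof (rule lipschitz_onI)
      fix x y :: 'a
      show "dist (\<psi> k x) (\<psi> k y) \<le> real k * dist x y"
        using lip[of k x y] lip[of k y x] by (simp add: dist_real_def dist_commute abs_le_iff)
    qed simp
  qed
  have Cb: "\<psi> k \<in> Cb" for k
    by (rule Cb_I[where B="real k", OF cont]) (use psi0 psih hle in \<open>auto intro: order_trans[OF psih hle]\<close>)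
  have lef: "ennreal (\<psi> k x) \<le> f x" for k x
  proof -
    have "ennreal (\<psi> k x) \<le> ennreal (h k x)" using psih by (rule ennreal_leI)
    also have "\<dots> \<le> f x" unfolding hk by simp
    finally show ?thesis .
  qed
  have inc: "incseq (\<lambda>k. \<psi> k x)" for x
  proof (rule incseq_SucI)
    fix k
    show "\<psi> k x \<le> \<psi> (Suc k) x"
    proof (rule psi_ge)
      fix y
      have "\<psi> k x \<le> h k y + real k * dist x y" by (rule psi_le)
      also have "\<dots> \<le> h (Suc k) y + real (Suc k) * dist x y"
        by (intro add_mono hmono mult_right_mono) auto
      finally show "\<psi> k x \<le> h (Suc k) y + real (Suc k) * dist x y" .
    qed
  qed
  have sup: "(SUP k. ennreal (\<psi> k x)) = f x" for x
  proof (rule antisym)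
    show "(SUP k. ennreal (\<psi> k x)) \<le> f x" by (rule SUP_least) (rule lef)
    show "f x \<le> (SUP k. ennreal (\<psi> k x))"
    proof (rule dense_le)
      fix t assume t: "t < f x"
      then have "t \<noteq> \<infinity>" by auto
      then obtain r where r: "t = ennreal r" "0 \<le> r" by (cases t rule: ennreal_cases) auto
      have "open {y. t < f y}" using assms by (simp add: lsc_def)
      moreover have "x \<in> {y. t < f y}" using t by simp
      ultimately obtain e where e: "0 < e" "\<And>y. dist y x < e \<Longrightarrow> t < f y"
        unfolding open_dist by blast
      obtain k :: nat where k: "r + 1 + r / e \<le> real k" using real_arch_simple by blast
      have rk: "r < real k" using k r e by (smt (verit) divide_nonneg_pos)
      have rke: "r \<le> real k * e"
      proof -
        have "r / e \<le> real k" using k r by (smt (verit) divide_nonneg_pos e(1))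
        then show ?thesis using e by (simp add: field_simps)
      qed
      have "r \<le> \<psi> k x"
      proof (rule psi_ge)
        fix y
        show "r \<le> h k y + real k * dist x y"
        proof (cases "dist y x < e")
          case True
          then have "t < f y" by (rule e)
          moreover have "t < of_nat k" using rk r by (simp add: ennreal_of_nat_eq_real_of_nat ennreal_lessI)
          ultimately have "t < ennreal (h k y)" unfolding hk by simp
          then have "r < h k y" using r by (simp add: ennreal_less_iff)
          then show ?thesis by (smt (verit) mult_nonneg_nonneg of_nat_0_le_iff zero_le_dist)
        next
          case False
          then have "real k * e \<le> real k * dist x y" by (simp add: dist_commute mult_left_mono)
          then show ?thesis using rke h0[of k y] by linarith
        qed
      qed
      then have "t \<le> ennreal (\<psi> k x)" using r by (simp add: ennreal_leI)
      also have "\<dots> \<le> (SUP k. ennreal (\<psi> k x))" by (rule SUP_upper) simp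
      finally show "t \<le> (SUP k. ennreal (\<psi> k x))" .
    qed
  qed
  show ?thesis using that Cb psi0 lef inc sup by blast
qed

lemma lsc_add:
  fixes f g :: "'a::metric_space \<Rightarrow> ennreal"
  assumes "lsc f" "lsc g"
  shows "lsc (\<lambda>x. f x + g x)"
proof -
  obtain \<psi>1 where 1: "\<And>k. \<psi>1 k \<in> Cb" "\<And>k x. 0 \<le> \<psi>1 k x" "\<And>x. incseq (\<lambda>k. \<psi>1 k x)" "\<And>x. (SUP k. ennreal (\<psi>1 k x)) = f x"
    using lsc_approx[OF assms(1)] by metis
  obtain \<psi>2 where 2: "\<And>k. \<psi>2 k \<in> Cb" "\<And>k x. 0 \<le> \<psi>2 k x" "\<And>x. incseq (\<lambda>k. \<psi>2 k x)" "\<And>x. (SUP k. ennreal (\<psi>2 k x)) = g x"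
    using lsc_approx[OF assms(2)] by metis
  have eq: "f x + g x = (SUP k. ennreal (\<psi>1 k x + \<psi>2 k x))" for x
  proof -
    have "(SUP k. ennreal (\<psi>1 k x + \<psi>2 k x)) = (SUP k. ennreal (\<psi>1 k x) + ennreal (\<psi>2 k x))"
      using 1(2) 2(2) by (simp add: ennreal_plus)
    also have "\<dots> = (SUP k. ennreal (\<psi>1 k x)) + (SUP k. ennreal (\<psi>2 k x))"
      by (rule ennreal_SUP_add) (use 1(3) 2(3) in \<open>auto simp: incseq_def intro: ennreal_leI\<close>)
    finally show ?thesis using 1(4) 2(4) by simp
  qed
  show ?thesis unfolding eq
    by (rule lsc_SUP, rule lsc_cont) (use 1(1) 2(1) Cb_cont in \<open>auto intro!: continuous_intros\<close>)
qed

lemma nrm_tendsto: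
  assumes P: "borel_prob P" and p: "0 < p" and ch: "\<And>k. ch k \<in> Cb" and \<psi>: "\<psi> \<in> Cb"
    and lim: "\<And>x. (\<lambda>k. ch k x) \<longlonglongrightarrow> \<psi> x" and B: "\<And>k x. \<bar>ch k x\<bar> \<le> B"
  shows "(\<lambda>k. nrm P p (ch k)) \<longlonglongrightarrow> nrm P p \<psi>"
proof -
  interpret prob_space P using P by (simp add: borel_prob_def)
  have sP: "sets P = sets borel" using P by (simp add: borel_prob_def)
  have "(\<lambda>k. \<integral>x. \<bar>ch k x\<bar> powr p \<partial>P) \<longlonglongrightarrow> (\<integral>x. \<bar>\<psi> x\<bar> powr p \<partial>P)"
  proof (rule integral_dominated_convergence[where w="\<lambda>x. B powr p"])
    show "(\<lambda>x. \<bar>\<psi> x\<bar> powr p) \<in> borel_measurable P" using Cb_meas[OF Cb_powr[OF \<psi> p] sP] .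
    show "(\<lambda>x. \<bar>ch k x\<bar> powr p) \<in> borel_measurable P" for k using Cb_meas[OF Cb_powr[OF ch p] sP] .
    show "integrable P (\<lambda>x. B powr p)" by simp
    show "AE x in P. (\<lambda>k. \<bar>ch k x\<bar> powr p) \<longlonglongrightarrow> \<bar>\<psi> x\<bar> powr p"
      using lim p by (intro AE_I2 tendsto_powr' tendsto_intros) auto
    show "AE x in P. norm (\<bar>ch k x\<bar> powr p) \<le> B powr p" for k
      using B p by (intro AE_I2) (auto intro: powr_mono2)
  qed
  then show ?thesis unfolding nrm_def using p
    by (intro tendsto_powr' tendsto_intros) (auto intro: int_pow_nonneg)
qed

lemma cap_lsc_add:
  fixes f1 f2 :: "'a::metric_space \<Rightarrow> ennreal"
  assumes PP: "\<forall>P\<in>\<P>. borel_prob P" and p: "1 \<le> p" and l1: "lsc f1" and l2: "lsc f2"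
  shows "cap_lsc \<P> p (\<lambda>x. f1 x + f2 x) \<le> cap_lsc \<P> p f1 + cap_lsc \<P> p f2"
proof -
  have p0: "0 < p" using p by simp
  obtain \<psi>1 where 1: "\<And>k. \<psi>1 k \<in> Cb" "\<And>k x. 0 \<le> \<psi>1 k x" "\<And>k x. ennreal (\<psi>1 k x) \<le> f1 x" "\<And>x. incseq (\<lambda>k. \<psi>1 k x)" "\<And>x. (SUP k. ennreal (\<psi>1 k x)) = f1 x"
    using lsc_approx[OF l1] by metis
  obtain \<psi>2 where 2: "\<And>k. \<psi>2 k \<in> Cb" "\<And>k x. 0 \<le> \<psi>2 k x" "\<And>k x. ennreal (\<psi>2 k x) \<le> f2 x" "\<And>x. incseq (\<lambda>k. \<psi>2 k x)" "\<And>x. (SUP k. ennreal (\<psi>2 k x)) = f2 x"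
    using lsc_approx[OF l2] by metis
  show ?thesis
    unfolding cap_lsc_def[of _ _ "\<lambda>x. f1 x + f2 x"]
  proof (intro SUP_least)
    fix \<psi> assume "\<psi> \<in> {\<phi> \<in> Cb. \<forall>x. 0 \<le> \<phi> x \<and> ennreal (\<phi> x) \<le> f1 x + f2 x}"
    then have \<psi>: "\<psi> \<in> Cb" "\<And>x. 0 \<le> \<psi> x" "\<And>x. ennreal (\<psi> x) \<le> f1 x + f2 x" by auto
    define ch where "ch k x = min (\<psi> x) (\<psi>1 k x + \<psi>2 k x)" for k x
    have chCb: "ch k \<in> Cb" for k unfolding ch_def using \<psi>(1) 1(1) 2(1) by (intro Cb_min Cb_add)
    have ch0: "0 \<le> ch k x" for k x unfolding ch_def using \<psi>(2) 1(2) 2(2) by (simp add: add_nonneg_nonneg)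
    have chle: "ch k x \<le> \<psi> x" for k x unfolding ch_def by simp
    have chinc: "ch k x \<le> ch k' x" if "k \<le> k'" for k k' x
    proof -
      have "\<psi>1 k x + \<psi>2 k x \<le> \<psi>1 k' x + \<psi>2 k' x" using 1(4)[of x] 2(4)[of x] that by (auto simp: incseq_def intro: add_mono)
      then show ?thesis unfolding ch_def by (rule min.mono[OF order_refl])
    qed
    have chlim: "(\<lambda>k. ch k x) \<longlonglongrightarrow> \<psi> x" for x
    proof (rule order_tendstoI)
      fix a assume a: "a < \<psi> x"
      show "\<forall>\<^sub>F k in sequentially. a < ch k x"
      proof (cases "a < 0")
        case True then show ?thesis using ch0 by (intro always_eventually) (auto intro: less_le_trans)
      next
        case False
        have "ennreal a < ennreal (\<psi> x)" using a False by (simp add: ennreal_lessI)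
        also have "\<dots> \<le> f1 x + f2 x" by (rule \<psi>(3))
        also have "\<dots> = (SUP k. ennreal (\<psi>1 k x)) + (SUP k. ennreal (\<psi>2 k x))" using 1(5) 2(5) by simp
        also have "\<dots> = (SUP k. ennreal (\<psi>1 k x) + ennreal (\<psi>2 k x))"
          by (rule ennreal_SUP_add[symmetric]) (use 1(4) 2(4) in \<open>auto simp: incseq_def intro: ennreal_leI\<close>)
        finally obtain k where "ennreal a < ennreal (\<psi>1 k x) + ennreal (\<psi>2 k x)" by (auto simp: less_SUP_iff)
        then have "a < \<psi>1 k x + \<psi>2 k x" using 1(2) 2(2) False
          by (simp add: ennreal_plus[symmetric] ennreal_less_iff del: ennreal_plus)
        then have "a < ch k x" using a unfolding ch_def by simp
        then show ?thesis unfolding eventually_sequentially using chinc by (meson less_le_trans)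
      qed
    next
      fix a assume "\<psi> x < a"
      then show "\<forall>\<^sub>F k in sequentially. ch k x < a" using chle by (intro always_eventually) (auto intro: le_less_trans)
    qed
    obtain B where B: "\<forall>x. \<bar>\<psi> x\<bar> \<le> B" using Cb_bdd[OF \<psi>(1)] by auto
    have chB: "\<bar>ch k x\<bar> \<le> B" for k x
    proof -
      have "\<bar>ch k x\<bar> = ch k x" using ch0[of k x] by simp
      also have "\<dots> \<le> \<psi> x" by (rule chle)
      also have "\<dots> \<le> B" using B[rule_format, of x] by simp
      finally show ?thesis .
    qed
    show "cap_Cb \<P> p \<psi> \<le> cap_lsc \<P> p f1 + cap_lsc \<P> p f2"
      unfolding cap_Cb_eq
    proof (intro SUP_least)
      fix P assume P: "P \<in> \<P>"
      then have bP: "borel_prob P" using PP by auto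
      have lim: "(\<lambda>k. ennreal (nrm P p (ch k))) \<longlonglongrightarrow> ennreal (nrm P p \<psi>)"
        using chB by (intro tendsto_ennrealI nrm_tendsto[OF bP p0 chCb \<psi>(1) chlim, of B])
      show "ennreal (nrm P p \<psi>) \<le> cap_lsc \<P> p f1 + cap_lsc \<P> p f2"
      proof (rule LIMSEQ_le_const2[OF lim], intro exI allI impI)
        fix k
        have "nrm P p (ch k) \<le> nrm P p (\<lambda>x. \<psi>1 k x + \<psi>2 k x)"
          using bP chCb 1(1) 2(1) p0 ch0 1(2) 2(2) by (intro nrm_mono Cb_add) (auto simp: ch_def)
        also have "\<dots> \<le> nrm P p (\<psi>1 k) + nrm P p (\<psi>2 k)" using bP 1(1) 2(1) p by (rule nrm_triangle)
        finally have "ennreal (nrm P p (ch k)) \<le> ennreal (nrm P p (\<psi>1 k)) + ennreal (nrm P p (\<psi>2 k))"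
          by (simp add: ennreal_plus[symmetric] ennreal_leI del: ennreal_plus)
        also have "\<dots> \<le> cap_Cb \<P> p (\<psi>1 k) + cap_Cb \<P> p (\<psi>2 k)" using P by (intro add_mono cap_Cb_ge)
        also have "\<dots> \<le> cap_lsc \<P> p f1 + cap_lsc \<P> p f2" using 1 2 by (intro add_mono cap_lsc_ge) auto
        finally show "ennreal (nrm P p (ch k)) \<le> cap_lsc \<P> p f1 + cap_lsc \<P> p f2" .
      qed
    qed
  qed
qed

lemma cap_add:
  fixes a b :: "'a::metric_space \<Rightarrow> real"
  assumes PP: "\<forall>P\<in>\<P>. borel_prob P" and p: "1 \<le> p"
  shows "cap \<P> p (\<lambda>x. a x + b x) \<le> cap \<P> p a + cap \<P> p b"
proof (rule ennreal_le_epsilon)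
  fix e :: real assume fin: "cap \<P> p a + cap \<P> p b < top" and e: "0 < e"
  have "cap \<P> p a < cap \<P> p a + ennreal (e/2)" using fin e by auto
  then obtain f1 where f1: "lsc f1" "\<forall>x. ennreal \<bar>a x\<bar> \<le> f1 x" "cap_lsc \<P> p f1 < cap \<P> p a + ennreal (e/2)"
    unfolding cap_def[of _ _ a] by (auto simp: INF_less_iff)
  have "cap \<P> p b < cap \<P> p b + ennreal (e/2)" using fin e by auto
  then obtain f2 where f2: "lsc f2" "\<forall>x. ennreal \<bar>b x\<bar> \<le> f2 x" "cap_lsc \<P> p f2 < cap \<P> p b + ennreal (e/2)"
    unfolding cap_def[of _ _ b] by (auto simp: INF_less_iff)
  have "cap \<P> p (\<lambda>x. a x + b x) \<le> cap_lsc \<P> p (\<lambda>x. f1 x + f2 x)"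
  proof (rule cap_le_lsc)
    show "lsc (\<lambda>x. f1 x + f2 x)" using f1 f2 by (intro lsc_add) auto
    fix x
    have "ennreal \<bar>a x + b x\<bar> \<le> ennreal (\<bar>a x\<bar> + \<bar>b x\<bar>)" by (intro ennreal_leI abs_triangle_ineq)
    also have "\<dots> = ennreal \<bar>a x\<bar> + ennreal \<bar>b x\<bar>" by (simp add: ennreal_plus)
    also have "\<dots> \<le> f1 x + f2 x" using f1 f2 by (intro add_mono) auto
    finally show "ennreal \<bar>a x + b x\<bar> \<le> f1 x + f2 x" .
  qed
  also have "\<dots> \<le> cap_lsc \<P> p f1 + cap_lsc \<P> p f2" using PP p f1 f2 by (intro cap_lsc_add) auto
  also have "\<dots> \<le> (cap \<P> p a + ennreal (e/2)) + (cap \<P> p b + ennreal (e/2))"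
    using f1 f2 by (intro add_mono) auto
  also have "\<dots> = cap \<P> p a + cap \<P> p b + ennreal e"
    using e by (simp add: ennreal_plus[symmetric] add_ac del: ennreal_plus)
  finally show "cap \<P> p (\<lambda>x. a x + b x) \<le> cap \<P> p a + cap \<P> p b + ennreal e" .
qed



lemma Mplus_C:
  assumes "\<mu> \<in> Mplus \<P> p"
  obtains C where "0 \<le> C" "\<And>\<phi>. \<phi> \<in> Cb \<Longrightarrow> ennreal \<bar>integral\<^sup>L \<mu> \<phi>\<bar> \<le> ennreal C * cap \<P> p \<phi>"
proof -
  obtain C where C: "\<forall>\<phi>\<in>Cb. ennreal \<bar>integral\<^sup>L \<mu> \<phi>\<bar> \<le> ennreal C * cap \<P> p \<phi>"
    using assms by (auto simp: Mplus_def)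
  have "ennreal C = ennreal (max 0 C)" by (cases "C \<le> 0") (auto simp: ennreal_eq_0_iff max_def)
  then show ?thesis using that[of "max 0 C"] C by auto
qed

lemma Mplus_bf: "\<mu> \<in> Mplus \<P> p \<Longrightarrow> borel_finite \<mu>"
  by (simp add: Mplus_def)

lemma diff_fun_eq: "(\<lambda>x. \<phi> x - \<psi> x) = (\<lambda>x. (\<phi> x - g x) + (g x - \<psi> x :: real))"
  by (simp add: fun_eq_iff)

lemma cap_diff_tri:
  fixes g :: "'a::metric_space \<Rightarrow> real"
  assumes PP: "\<forall>P\<in>\<P>. borel_prob P" and p: "1 \<le> p"
  shows "cap \<P> p (\<lambda>x. \<phi> x - \<psi> x) \<le> cap \<P> p (\<lambda>x. g x - \<phi> x) + cap \<P> p (\<lambda>x. g x - \<psi> x)"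
proof -
  have "cap \<P> p (\<lambda>x. \<phi> x - \<psi> x) = cap \<P> p (\<lambda>x. (\<phi> x - g x) + (g x - \<psi> x))"
    by (simp add: diff_fun_eq[symmetric])
  also have "\<dots> \<le> cap \<P> p (\<lambda>x. \<phi> x - g x) + cap \<P> p (\<lambda>x. g x - \<psi> x)" using PP p by (rule cap_add)
  also have "cap \<P> p (\<lambda>x. \<phi> x - g x) = cap \<P> p (\<lambda>x. g x - \<phi> x)" by (rule cap_minus_sym)
  finally show ?thesis .
qed

lemma key_est:
  fixes g :: "'a::metric_space \<Rightarrow> real"
  assumes PP: "\<forall>P\<in>\<P>. borel_prob P" and p: "1 \<le> p" and \<mu>: "\<mu> \<in> Mplus \<P> p"
    and C: "\<And>\<phi>. \<phi> \<in> Cb \<Longrightarrow> ennreal \<bar>integral\<^sup>L \<mu> \<phi>\<bar> \<le> ennreal C * cap \<P> p \<phi>"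
    and \<phi>: "\<phi> \<in> Cb" and \<psi>: "\<psi> \<in> Cb"
  shows "ennreal \<bar>integral\<^sup>L \<mu> \<phi> - integral\<^sup>L \<mu> \<psi>\<bar> \<le> ennreal C * (cap \<P> p (\<lambda>x. g x - \<phi> x) + cap \<P> p (\<lambda>x. g x - \<psi> x))"
proof -
  have "integral\<^sup>L \<mu> \<phi> - integral\<^sup>L \<mu> \<psi> = integral\<^sup>L \<mu> (\<lambda>x. \<phi> x - \<psi> x)"
    using \<phi> \<psi> Mplus_bf[OF \<mu>] by (simp add: Cb_int)
  then have "ennreal \<bar>integral\<^sup>L \<mu> \<phi> - integral\<^sup>L \<mu> \<psi>\<bar> \<le> ennreal C * cap \<P> p (\<lambda>x. \<phi> x - \<psi> x)"
    using C[OF Cb_diff[OF \<phi> \<psi>]] by simp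
  also have "\<dots> \<le> ennreal C * (cap \<P> p (\<lambda>x. g x - \<phi> x) + cap \<P> p (\<lambda>x. g x - \<psi> x))"
    using PP p by (intro mult_left_mono cap_diff_tri) auto
  finally show ?thesis .
qed

definition Pv where
  "Pv \<P> p \<mu> g v \<longleftrightarrow> (\<forall>e>0. \<exists>d>0. \<forall>\<phi>\<in>Cb.
       cap \<P> p (\<lambda>x. g x - \<phi> x) < ennreal d \<longrightarrow> \<bar>integral\<^sup>L \<mu> \<phi> - v\<bar> < e)"

lemma ext_val_Pv: "ext_val \<P> p \<mu> g = (THE v. Pv \<P> p \<mu> g v)"
  by (simp add: ext_val_def Pv_def)

lemma Pv_tendsto:
  assumes "Pv \<P> p \<mu> g w" "\<And>k. fs k \<in> Cb" "(\<lambda>k. cap \<P> p (\<lambda>x. g x - fs k x)) \<longlonglongrightarrow> 0"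
  shows "(\<lambda>k. integral\<^sup>L \<mu> (fs k)) \<longlonglongrightarrow> w"
proof (rule LIMSEQ_I)
  fix r :: real assume r: "0 < r"
  obtain d where d: "0 < d" "\<forall>\<phi>\<in>Cb. cap \<P> p (\<lambda>x. g x - \<phi> x) < ennreal d \<longrightarrow> \<bar>integral\<^sup>L \<mu> \<phi> - w\<bar> < r"
    using assms(1) r unfolding Pv_def by blast
  have "eventually (\<lambda>k. cap \<P> p (\<lambda>x. g x - fs k x) < ennreal d) sequentially"
    using order_tendstoD(2)[OF assms(3)] d(1) by simp
  then obtain N where "\<forall>k\<ge>N. cap \<P> p (\<lambda>x. g x - fs k x) < ennreal d" by (auto simp: eventually_sequentially)
  then show "\<exists>no. \<forall>n\<ge>no. norm (integral\<^sup>L \<mu> (fs n) - w) < r" using d assms(2) by auto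
qed

lemma EV:
  fixes g :: "'a::metric_space \<Rightarrow> real"
  assumes PP: "\<forall>P\<in>\<P>. borel_prob P" and p: "1 \<le> p" and \<mu>: "\<mu> \<in> Mplus \<P> p" and g: "g \<in> L1cap \<P> p"
    and fs: "\<And>k. fs k \<in> Cb" and lim: "(\<lambda>k. cap \<P> p (\<lambda>x. g x - fs k x)) \<longlonglongrightarrow> 0"
  shows "(\<lambda>k. integral\<^sup>L \<mu> (fs k)) \<longlonglongrightarrow> ext_val \<P> p \<mu> g"
proof -
  obtain C where C0: "0 \<le> C" and C: "\<And>\<phi>. \<phi> \<in> Cb \<Longrightarrow> ennreal \<bar>integral\<^sup>L \<mu> \<phi>\<bar> \<le> ennreal C * cap \<P> p \<phi>"
    using Mplus_C[OF \<mu>] by blast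
  have "\<forall>k. \<exists>\<phi>\<in>Cb. cap \<P> p (\<lambda>x. g x - \<phi> x) < ennreal (1 / Suc k)"
    using g by (auto simp: L1cap_def)
  then obtain a where a: "\<And>k. a k \<in> Cb" "\<And>k. cap \<P> p (\<lambda>x. g x - a k x) < ennreal (1 / Suc k)"
    by metis
  have est: "\<bar>integral\<^sup>L \<mu> \<phi> - integral\<^sup>L \<mu> (a k)\<bar> \<le> C * (c + 1 / Suc k)"
    if "\<phi> \<in> Cb" "cap \<P> p (\<lambda>x. g x - \<phi> x) \<le> ennreal c" "0 \<le> c" for \<phi> k c
  proof -
    have "ennreal \<bar>integral\<^sup>L \<mu> \<phi> - integral\<^sup>L \<mu> (a k)\<bar> \<le> ennreal C * (cap \<P> p (\<lambda>x. g x - \<phi> x) + cap \<P> p (\<lambda>x. g x - a k x))"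
      using PP p \<mu> C that(1) a(1) by (rule key_est)
    also have "\<dots> \<le> ennreal C * (ennreal c + ennreal (1 / Suc k))"
      using that(2) a(2)[of k] by (intro mult_left_mono add_mono) auto
    also have "\<dots> = ennreal (C * (c + 1 / Suc k))" using C0 that(3) by (simp add: ennreal_mult ennreal_plus)
    finally show ?thesis using C0 that(3) by (simp add: ennreal_le_iff)
  qed
  have ca: "cap \<P> p (\<lambda>x. g x - a k x) \<le> ennreal (1 / Suc k)" for k using a(2)[of k] by simp
  have "Cauchy (\<lambda>k. integral\<^sup>L \<mu> (a k))"
  proof (rule CauchyI)
    fix e :: real assume e: "0 < e"
    obtain M :: nat where M: "2 * C / e < M" using reals_Archimedean2 by blast
    have "\<bar>integral\<^sup>L \<mu> (a m) - integral\<^sup>L \<mu> (a n)\<bar> < e" if "M \<le> m" "M \<le> n" for m n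
    proof -
      have "\<bar>integral\<^sup>L \<mu> (a m) - integral\<^sup>L \<mu> (a n)\<bar> \<le> C * (1 / Suc m + 1 / Suc n)"
        using est[OF a(1) ca] by simp
      also have "\<dots> \<le> C * (1 / Suc M + 1 / Suc M)"
        using that C0 by (intro mult_left_mono add_mono divide_left_mono) auto
      also have "\<dots> = 2 * C / Suc M" by simp
      also have "\<dots> < e"
      proof -
        have "2 * C < e * M" using M e by (simp add: field_simps)
        also have "\<dots> \<le> e * Suc M" using e by simp
        finally show ?thesis by (simp add: field_simps)
      qed
      finally show ?thesis .
    qed
    then show "\<exists>M. \<forall>m\<ge>M. \<forall>n\<ge>M. norm (integral\<^sup>L \<mu> (a m) - integral\<^sup>L \<mu> (a n)) < e" by auto
  qed
  then obtain v where v: "(\<lambda>k. integral\<^sup>L \<mu> (a k)) \<longlonglongrightarrow> v" using convergent_eq_Cauchy convergent_def by blast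
  have Pvv: "Pv \<P> p \<mu> g v"
    unfolding Pv_def
  proof (intro allI impI)
    fix e :: real assume e: "0 < e"
    define d where "d = e / (2 * (C + 1))"
    have d: "0 < d" "C * d < e / 2" using e C0 unfolding d_def by (auto simp: field_simps)
    have ev1: "eventually (\<lambda>k. \<bar>integral\<^sup>L \<mu> (a k) - v\<bar> < e / 4) sequentially"
    proof -
      have "0 < e / 4" using e by simp
      then show ?thesis using v unfolding tendsto_iff dist_real_def by blast
    qed
    obtain N :: nat where N: "4 * C / e < N" using reals_Archimedean2 by blast
    have ev2: "eventually (\<lambda>k. C * (1 / Suc k) \<le> e / 4) sequentially"
    proof (rule eventually_sequentiallyI[of N])
      fix k assume k: "N \<le> k"
      have "4 * C \<le> e * N" using N e by (simp add: field_simps)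
      also have "\<dots> \<le> e * Suc k" using e k by simp
      finally show "C * (1 / Suc k) \<le> e / 4" by (simp add: field_simps)
    qed
    obtain k where k1: "\<bar>integral\<^sup>L \<mu> (a k) - v\<bar> < e / 4" and k2: "C * (1 / Suc k) \<le> e / 4"
    proof -
      from eventually_conj[OF ev1 ev2] obtain N where "\<forall>k\<ge>N. \<bar>integral\<^sup>L \<mu> (a k) - v\<bar> < e / 4 \<and> C * (1 / Suc k) \<le> e / 4"
        unfolding eventually_sequentially by blast
      then show ?thesis using that by blast
    qed
    show "\<exists>d>0. \<forall>\<phi>\<in>Cb. cap \<P> p (\<lambda>x. g x - \<phi> x) < ennreal d \<longrightarrow> \<bar>integral\<^sup>L \<mu> \<phi> - v\<bar> < e"
    proof (intro exI[of _ d] conjI ballI impI)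
      fix \<phi> assume \<phi>: "\<phi> \<in> Cb" and c: "cap \<P> p (\<lambda>x. g x - \<phi> x) < ennreal d"
      have "\<bar>integral\<^sup>L \<mu> \<phi> - integral\<^sup>L \<mu> (a k)\<bar> \<le> C * (d + 1 / Suc k)"
        using est[OF \<phi> less_imp_le[OF c]] d by simp
      also have "\<dots> = C * d + C * (1 / Suc k)" by (simp add: algebra_simps)
      finally have "\<bar>integral\<^sup>L \<mu> \<phi> - integral\<^sup>L \<mu> (a k)\<bar> < e / 2 + e / 4" using d k2 by linarith
      then show "\<bar>integral\<^sup>L \<mu> \<phi> - v\<bar> < e" using k1 by linarith
    qed (use d in auto)
  qed
  have capa: "(\<lambda>k. cap \<P> p (\<lambda>x. g x - a k x)) \<longlonglongrightarrow> 0"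
  proof (rule tendsto_sandwich[where f="\<lambda>k. 0" and h="\<lambda>k. ennreal (1 / Suc k)"])
    show "((\<lambda>k. ennreal (1 / Suc k)) \<longlongrightarrow> 0) sequentially"
      using tendsto_ennrealI[OF LIMSEQ_Suc[OF lim_inverse_n']] by (simp add: divide_inverse)
  qed (use ca in auto)
  have "ext_val \<P> p \<mu> g = v"
    unfolding ext_val_Pv
  proof (rule the_equality)
    show "Pv \<P> p \<mu> g v" by (rule Pvv)
    fix w assume "Pv \<P> p \<mu> g w"
    from Pv_tendsto[OF this a(1) capa] v show "w = v" by (rule LIMSEQ_unique)
  qed
  then show ?thesis using Pv_tendsto[OF Pvv fs lim] by simp
qed



definition wts :: "(nat \<Rightarrow> real) \<Rightarrow> nat measure" where
  "wts \<alpha> = density (count_space UNIV) (\<lambda>n. ennreal (\<alpha> n))"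

lemma Q_meas:
  assumes "\<forall>n. borel_prob (Q n)"
  shows "Q \<in> measurable (wts \<alpha>) (subprob_algebra (borel :: 'a::topological_space measure))"
proof -
  have "Q \<in> measurable (count_space UNIV) (subprob_algebra (borel :: 'a measure))"
    using assms by (auto simp: space_subprob_algebra borel_prob_def prob_space_imp_subprob_space)
  then show ?thesis unfolding wts_def by (simp add: measurable_cong_sets)
qed

lemma space_wts[simp]: "space (wts \<alpha>) = UNIV"
  by (simp add: wts_def)

lemma sets_bind_wts:
  assumes "\<forall>n. borel_prob (Q n)"
  shows "sets (wts \<alpha> \<bind> Q) = sets borel"
  using assms by (intro sets_bind) (auto simp: borel_prob_def)

lemma mixture_bind:
  fixes Q :: "nat \<Rightarrow> 'a::topological_space measure"
  assumes Q: "\<forall>n. borel_prob (Q n)"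
  shows "mixture \<alpha> Q = wts \<alpha> \<bind> Q"
proof -
  let ?B = "wts \<alpha> \<bind> Q"
  have sB: "sets ?B = sets borel" by (rule sets_bind_wts[OF Q])
  have spB: "space ?B = UNIV" using sets_eq_imp_space_eq[OF sB] by simp
  have eq: "emeasure ?B A = (\<Sum>n. ennreal (\<alpha> n) * emeasure (Q n) A)" if "A \<in> sets borel" for A
  proof -
    have "emeasure ?B A = (\<integral>\<^sup>+n. emeasure (Q n) A \<partial>wts \<alpha>)"
      using Q_meas[OF Q] that by (intro emeasure_bind) auto
    also have "\<dots> = (\<integral>\<^sup>+n. ennreal (\<alpha> n) * emeasure (Q n) A \<partial>count_space UNIV)"
      unfolding wts_def by (subst nn_integral_density) auto
    also have "\<dots> = (\<Sum>n. ennreal (\<alpha> n) * emeasure (Q n) A)" by (rule nn_integral_count_space_nat)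
    finally show ?thesis .
  qed
  have "mixture \<alpha> Q = measure_of UNIV (sets borel) (emeasure ?B)"
    unfolding mixture_def
  proof (rule measure_of_eq)
    show "sets borel \<subseteq> Pow UNIV" by auto
    fix a :: "'a set" assume "a \<in> sigma_sets UNIV (sets borel)"
    then have "a \<in> sets borel" by (metis sets.sigma_sets_eq space_borel)
    then show "(\<Sum>n. ennreal (\<alpha> n) * emeasure (Q n) a) = emeasure ?B a" using eq by simp
  qed
  also have "\<dots> = measure_of (space ?B) (sets ?B) (emeasure ?B)" using sB spB by simp
  also have "\<dots> = ?B" by (rule measure_of_of_measure)
  finally show ?thesis .
qed

lemma mixture_sets:
  assumes "\<forall>n. borel_prob (Q n)"
  shows "sets (mixture \<alpha> Q) = sets borel"
  using mixture_bind[OF assms] sets_bind_wts[OF assms] by simp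

lemma mixture_nn:
  assumes Q: "\<forall>n. borel_prob (Q n)" and f: "f \<in> borel_measurable borel"
  shows "(\<integral>\<^sup>+x. f x \<partial>mixture \<alpha> Q) = (\<Sum>n. ennreal (\<alpha> n) * (\<integral>\<^sup>+x. f x \<partial>Q n))"
proof -
  have "(\<integral>\<^sup>+x. f x \<partial>mixture \<alpha> Q) = (\<integral>\<^sup>+n. (\<integral>\<^sup>+x. f x \<partial>Q n) \<partial>wts \<alpha>)"
    unfolding mixture_bind[OF Q] by (rule nn_integral_bind[OF f Q_meas[OF Q]])
  also have "\<dots> = (\<integral>\<^sup>+n. ennreal (\<alpha> n) * (\<integral>\<^sup>+x. f x \<partial>Q n) \<partial>count_space UNIV)"
    unfolding wts_def by (subst nn_integral_density) auto
  also have "\<dots> = (\<Sum>n. ennreal (\<alpha> n) * (\<integral>\<^sup>+x. f x \<partial>Q n))" by (rule nn_integral_count_space_nat)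
  finally show ?thesis .
qed

lemma mixture_bf:
  assumes Q: "\<forall>n. borel_prob (Q n)" and a: "\<forall>n. 0 \<le> \<alpha> n" "\<alpha> sums 1"
  shows "borel_finite (mixture \<alpha> Q)"
proof -
  have "emeasure (mixture \<alpha> Q) (space (mixture \<alpha> Q)) = (\<integral>\<^sup>+x. 1 \<partial>mixture \<alpha> Q)" by simp
  also have "\<dots> = (\<Sum>n. ennreal (\<alpha> n) * (\<integral>\<^sup>+x. 1 \<partial>Q n))" by (rule mixture_nn[OF Q]) simp
  also have "\<dots> = (\<Sum>n. ennreal (\<alpha> n))"
  proof -
    have "(\<integral>\<^sup>+x. 1 \<partial>Q n) = 1" for n
    proof -
      interpret prob_space "Q n" using Q by (simp add: borel_prob_def)
      show ?thesis by (simp add: emeasure_space_1)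
    qed
    then show ?thesis by simp
  qed
  also have "\<dots> = ennreal 1" using a by (subst suminf_ennreal2) (auto simp: sums_iff)
  finally have "emeasure (mixture \<alpha> Q) (space (mixture \<alpha> Q)) \<noteq> \<infinity>" by simp
  then show ?thesis unfolding borel_finite_def using mixture_sets[OF Q] by (auto intro: finite_measureI)
qed



lemma nn_Cb:
  assumes "borel_finite M" "f \<in> Cb" "\<And>x. 0 \<le> f x"
  shows "(\<integral>\<^sup>+x. ennreal (f x) \<partial>M) = ennreal (integral\<^sup>L M f)"
  using assms by (intro nn_integral_eq_integral Cb_int) auto

lemma sum_alpha:
  assumes "\<forall>n. 0 < \<alpha> n" "\<alpha> sums 1"
  shows "(\<Sum>n. ennreal (\<alpha> n)) = 1"
  using assms by (subst suminf_ennreal2) (auto simp: sums_iff less_imp_le)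

lemma mixture_Mplus:
  fixes \<P> :: "'a::metric_space measure set"
  assumes PP: "\<forall>P\<in>\<P>. borel_prob P" and p: "1 \<le> p" and Q: "\<forall>n. borel_prob (Q n)"
    and a: "\<forall>n. 0 < \<alpha> n" "\<alpha> sums 1"
    and H1: "\<forall>n. \<forall>\<phi>\<in>Cb. ennreal (nrm (Q n) p \<phi>) \<le> cap_Cb \<P> p \<phi>"
  shows "mixture \<alpha> Q \<in> Mplus \<P> p"
proof -
  let ?\<mu> = "mixture \<alpha> Q"
  have bf: "borel_finite ?\<mu>" using Q a by (intro mixture_bf) (auto intro: less_imp_le)
  have "ennreal \<bar>integral\<^sup>L ?\<mu> \<phi>\<bar> \<le> ennreal 1 * cap \<P> p \<phi>" if \<phi>: "\<phi> \<in> Cb" for \<phi>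
  proof -
    have aCb: "(\<lambda>x. \<bar>\<phi> x\<bar>) \<in> Cb" using \<phi> by (rule Cb_abs)
    have "ennreal \<bar>integral\<^sup>L ?\<mu> \<phi>\<bar> \<le> ennreal (\<integral>x. \<bar>\<phi> x\<bar> \<partial>?\<mu>)" by (intro ennreal_leI integral_abs_bound)
    also have "\<dots> = (\<integral>\<^sup>+x. ennreal \<bar>\<phi> x\<bar> \<partial>?\<mu>)" using nn_Cb[OF bf aCb] by simp
    also have "\<dots> = (\<Sum>n. ennreal (\<alpha> n) * (\<integral>\<^sup>+x. ennreal \<bar>\<phi> x\<bar> \<partial>Q n))"
      using Q Cb_meas[OF aCb, of borel] by (intro mixture_nn) auto
    also have "\<dots> \<le> (\<Sum>n. ennreal (\<alpha> n) * cap_Cb \<P> p \<phi>)"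
    proof (intro suminf_le summableI mult_left_mono)
      fix n
      have "(\<integral>\<^sup>+x. ennreal \<bar>\<phi> x\<bar> \<partial>Q n) = ennreal (\<integral>x. \<bar>\<phi> x\<bar> \<partial>Q n)" using nn_Cb[OF bp_bf aCb] Q by simp
      also have "\<dots> \<le> ennreal (nrm (Q n) p \<phi>)" using Q \<phi> p by (intro ennreal_leI int_abs_le_nrm) auto
      also have "\<dots> \<le> cap_Cb \<P> p \<phi>" using H1 \<phi> by auto
      finally show "(\<integral>\<^sup>+x. ennreal \<bar>\<phi> x\<bar> \<partial>Q n) \<le> cap_Cb \<P> p \<phi>" .
    qed auto
    also have "\<dots> = cap_Cb \<P> p \<phi>" using sum_alpha[OF a] by simp
    also have "\<dots> = cap \<P> p \<phi>" using cap_eq_Cb[OF PP \<phi>] p by simp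
    finally show ?thesis by simp
  qed
  then show ?thesis using bf unfolding Mplus_def by blast
qed

lemma cap_fun_eq: "(\<lambda>x. (g x - f x) + f x :: real) = g"
  by (simp add: fun_eq_iff)

lemma core:
  fixes \<P> :: "'a::metric_space measure set"
  assumes PP: "\<forall>P\<in>\<P>. borel_prob P" and p: "1 \<le> p" and Q: "\<forall>n. borel_prob (Q n)"
    and a: "\<forall>n. 0 < \<alpha> n" "\<alpha> sums 1"
    and H1: "\<forall>n. \<forall>\<phi>\<in>Cb. ennreal (nrm (Q n) p \<phi>) \<le> cap_Cb \<P> p \<phi>"
    and H2: "\<forall>\<phi>\<in>Cb. cap_Cb \<P> p \<phi> \<le> (SUP n. ennreal (nrm (Q n) p \<phi>))"
  shows "mixture \<alpha> Q \<in> canon_class \<P> p"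
proof -
  let ?\<mu> = "mixture \<alpha> Q"
  have p0: "0 < p" using p by simp
  have M: "?\<mu> \<in> Mplus \<P> p" using PP p Q a H1 by (rule mixture_Mplus)
  have bf: "borel_finite ?\<mu>" using M by (rule Mplus_bf)
  have "ext_val \<P> p ?\<mu> g = 0 \<longleftrightarrow> cap \<P> p g = 0" if g: "g \<in> L1cap \<P> p" "L1nonneg \<P> p g" for g
  proof
    assume c0: "cap \<P> p g = 0"
    have "(\<lambda>k. cap \<P> p (\<lambda>x. g x - (\<lambda>k x. 0) k x)) \<longlonglongrightarrow> 0" using c0 by simp
    from EV[OF PP p M g(1) _ this] have "(\<lambda>k. integral\<^sup>L ?\<mu> ((\<lambda>k x. 0) k)) \<longlonglongrightarrow> ext_val \<P> p ?\<mu> g"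
      by simp
    then have "(\<lambda>k. 0) \<longlonglongrightarrow> ext_val \<P> p ?\<mu> g" by simp
    from LIMSEQ_unique[OF tendsto_const this] show "ext_val \<P> p ?\<mu> g = 0" by simp
  next
    assume ev0: "ext_val \<P> p ?\<mu> g = 0"
    have "L1eq \<P> p g g" by (simp add: L1eq_def cap_zero)
    from g(2)[unfolded L1nonneg_def, rule_format, OF g(1) this]
    obtain fs where fs: "\<And>k. fs k \<in> Cb" "\<And>k x. 0 \<le> fs k x"
      and lim: "(\<lambda>k. cap \<P> p (\<lambda>x. g x - fs k x)) \<longlonglongrightarrow> 0"
      by blast
    have limmu: "(\<lambda>k. integral\<^sup>L ?\<mu> (fs k)) \<longlonglongrightarrow> 0"
      using EV[OF PP p M g(1) fs(1) lim] ev0 by simp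
    have limQ: "(\<lambda>k. integral\<^sup>L (Q n) (fs k)) \<longlonglongrightarrow> 0" for n
    proof (rule tendsto_sandwich[where f="\<lambda>k. 0" and h="\<lambda>k. integral\<^sup>L ?\<mu> (fs k) / \<alpha> n"])
      have "\<alpha> n * integral\<^sup>L (Q n) (fs k) \<le> integral\<^sup>L ?\<mu> (fs k)" for k
      proof -
        have bQ: "borel_finite (Q n)" using Q bp_bf by auto
        have "ennreal (\<alpha> n * integral\<^sup>L (Q n) (fs k)) = ennreal (\<alpha> n) * (\<integral>\<^sup>+x. ennreal (fs k x) \<partial>Q n)"
        proof -
          have i0: "0 \<le> integral\<^sup>L (Q n) (fs k)" using fs(2) by (intro integral_nonneg_AE) auto
          show ?thesis using nn_Cb[OF bQ fs(1,2)] a i0 by (simp add: ennreal_mult less_imp_le)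
        qed
        also have "\<dots> = (\<Sum>m\<in>{n}. ennreal (\<alpha> m) * (\<integral>\<^sup>+x. ennreal (fs k x) \<partial>Q m))" by simp
        also have "\<dots> \<le> (\<Sum>m. ennreal (\<alpha> m) * (\<integral>\<^sup>+x. ennreal (fs k x) \<partial>Q m))"
          by (intro sum_le_suminf summableI) auto
        also have "\<dots> = (\<integral>\<^sup>+x. ennreal (fs k x) \<partial>?\<mu>)"
          using Q Cb_meas[OF fs(1), of borel] by (intro mixture_nn[symmetric]) (auto intro: measurable_compose[OF _ measurable_ennreal])
        also have "\<dots> = ennreal (integral\<^sup>L ?\<mu> (fs k))" using nn_Cb[OF bf fs(1,2)] by simp
        finally show ?thesis
          using a fs(2) by (subst (asm) ennreal_le_iff) (auto intro!: integral_nonneg_AE)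
      qed
      then show "\<forall>\<^sub>F k in sequentially. integral\<^sup>L (Q n) (fs k) \<le> integral\<^sup>L ?\<mu> (fs k) / \<alpha> n"
        using a by (intro always_eventually allI) (simp add: field_simps mult.commute)
      show "\<forall>\<^sub>F k in sequentially. 0 \<le> integral\<^sup>L (Q n) (fs k)"
        using fs(2) by (intro always_eventually allI integral_nonneg_AE) auto
      show "(\<lambda>k. integral\<^sup>L ?\<mu> (fs k) / \<alpha> n) \<longlonglongrightarrow> 0" using tendsto_divide_zero[OF limmu] by simp
    qed simp
    show "cap \<P> p g = 0"
    proof (rule antisym[OF ennreal_le_epsilon[where y=0]])
      fix e :: real assume e: "0 < e"
      define \<epsilon> where "\<epsilon> = e / 5"
      have \<epsilon>: "0 < \<epsilon>" using e by (simp add: \<epsilon>_def)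
      obtain K where K: "\<And>k. K \<le> k \<Longrightarrow> cap \<P> p (\<lambda>x. g x - fs k x) < ennreal \<epsilon>"
        using order_tendstoD(2)[OF lim, of "ennreal \<epsilon>"] \<epsilon> by (auto simp: eventually_sequentially)
      have d2: "nrm (Q n) p (\<lambda>x. fs k x - fs m x) \<le> 2 * \<epsilon>" if "K \<le> k" "K \<le> m" for n k m
      proof -
        have "ennreal (nrm (Q n) p (\<lambda>x. fs k x - fs m x)) \<le> cap_Cb \<P> p (\<lambda>x. fs k x - fs m x)"
          using H1 Cb_diff[OF fs(1) fs(1)] by auto
        also have "\<dots> = cap \<P> p (\<lambda>x. fs k x - fs m x)" using cap_eq_Cb[OF PP Cb_diff[OF fs(1) fs(1)] p0] by simp
        also have "\<dots> \<le> cap \<P> p (\<lambda>x. g x - fs k x) + cap \<P> p (\<lambda>x. g x - fs m x)" using PP p by (rule cap_diff_tri)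
        also have "\<dots> \<le> ennreal \<epsilon> + ennreal \<epsilon>" using K that by (intro add_mono less_imp_le) auto
        also have "\<dots> = ennreal (2 * \<epsilon>)" using \<epsilon> by (simp add: ennreal_plus[symmetric] del: ennreal_plus)
        finally show ?thesis using \<epsilon> by (simp add: ennreal_le_iff)
      qed
      obtain B where B: "\<And>x. \<bar>fs K x\<bar> \<le> B" using Cb_bdd[OF fs(1)] by auto
      define M where "M = B + 1"
      have M0: "0 < M" using B[of undefined] unfolding M_def by linarith
      have KM: "fs K x \<le> M" for x using B[of x] unfolding M_def by linarith
      have nK: "nrm (Q n) p (fs K) \<le> 4 * \<epsilon>" for n
      proof -
        have bQ: "borel_prob (Q n)" using Q by simp
        define c where "c m = (M powr (p - 1) * integral\<^sup>L (Q n) (fs m)) powr (1 / p)" for m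
        have c: "c \<longlonglongrightarrow> 0"
          unfolding c_def
          by (rule tendsto_zero_powrI[OF tendsto_mult_right_zero[OF limQ] tendsto_const])
             (use p0 fs(2) in \<open>auto intro!: always_eventually mult_nonneg_nonneg integral_nonneg_AE\<close>)
        have bnd: "nrm (Q n) p (fs K) \<le> 4 * \<epsilon> + c m" if m: "K \<le> m" for m
        proof -
          have mCb: "(\<lambda>x. min (fs m x) M) \<in> Cb" using fs(1) by (intro Cb_min) auto
          have xCb: "(\<lambda>x. max 0 (fs m x - M)) \<in> Cb" using fs(1) by (intro Cb_max Cb_diff) auto
          have "nrm (Q n) p (fs K) = nrm (Q n) p (\<lambda>x. (fs K x - fs m x) + fs m x)" by simp
          also have "\<dots> \<le> nrm (Q n) p (\<lambda>x. fs K x - fs m x) + nrm (Q n) p (fs m)"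
            using bQ Cb_diff[OF fs(1) fs(1)] fs(1) p by (rule nrm_triangle)
          also have "nrm (Q n) p (fs m) = nrm (Q n) p (\<lambda>x. min (fs m x) M + max 0 (fs m x - M))"
          proof (rule arg_cong[where f="nrm (Q n) p"], rule ext)
            fix x show "fs m x = min (fs m x) M + max 0 (fs m x - M)" by (cases "fs m x \<le> M") (simp_all add: min_def max_def)
          qed
          also have "\<dots> \<le> nrm (Q n) p (\<lambda>x. min (fs m x) M) + nrm (Q n) p (\<lambda>x. max 0 (fs m x - M))"
            using bQ mCb xCb p by (rule nrm_triangle)
          also have "nrm (Q n) p (\<lambda>x. max 0 (fs m x - M)) \<le> nrm (Q n) p (\<lambda>x. fs m x - fs K x)"
          proof (rule nrm_mono[OF bQ xCb Cb_diff[OF fs(1) fs(1)] p0])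
            fix x show "\<bar>max 0 (fs m x - M)\<bar> \<le> \<bar>fs m x - fs K x\<bar>" using KM[of x] by (cases "fs m x \<le> M") (simp_all add: max_def)
          qed
          also have "\<dots> \<le> 2 * \<epsilon>" using d2 m by auto
          also have "nrm (Q n) p (\<lambda>x. min (fs m x) M) \<le> c m"
          proof -
            have pt: "\<bar>min (fs m x) M\<bar> powr p \<le> M powr (p - 1) * fs m x" for x
            proof -
              have f0: "0 \<le> fs m x" by (rule fs(2))
              define y where "y = min (fs m x) M"
              have y: "0 \<le> y" "y \<le> M" "y \<le> fs m x" using f0 M0 unfolding y_def by auto
              have "\<bar>y\<bar> powr p = y powr ((p - 1) + 1)" using y by simp
              also have "\<dots> = y powr (p - 1) * y powr 1" by (rule powr_add)
              also have "\<dots> \<le> M powr (p - 1) * fs m x"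
              proof (rule mult_mono)
                show "y powr (p - 1) \<le> M powr (p - 1)" using y p by (intro powr_mono2) auto
                show "y powr 1 \<le> fs m x" using y by simp
              qed (use y in auto)
              finally show ?thesis unfolding y_def .
            qed
            have "(\<integral>x. \<bar>min (fs m x) M\<bar> powr p \<partial>Q n) \<le> (\<integral>x. M powr (p - 1) * fs m x \<partial>Q n)"
              using pt bQ Cb_int_pow[OF mCb bQ p0] Cb_int[OF fs(1) bp_bf[OF bQ]] by (intro integral_mono) auto
            also have "\<dots> = M powr (p - 1) * integral\<^sup>L (Q n) (fs m)" by simp
            finally show ?thesis unfolding nrm_def c_def using p0
              by (intro powr_mono2) (auto intro: int_pow_nonneg)
          qed
          finally show ?thesis using d2[of K m n] m by linarith
        qed
        have "(\<lambda>m. 4 * \<epsilon> + c m) \<longlonglongrightarrow> 4 * \<epsilon> + 0" by (intro tendsto_intros c)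
        then have "4 * \<epsilon> + 0 \<ge> nrm (Q n) p (fs K)"
          by (rule LIMSEQ_le_const) (use bnd in blast)
        then show ?thesis by simp
      qed
      have "cap \<P> p (fs K) = cap_Cb \<P> p (fs K)" using cap_eq_Cb[OF PP fs(1) p0] .
      also have "\<dots> \<le> (SUP n. ennreal (nrm (Q n) p (fs K)))" using H2 fs(1) by auto
      also have "\<dots> \<le> ennreal (4 * \<epsilon>)" using nK by (intro SUP_least ennreal_leI) auto
      finally have cK: "cap \<P> p (fs K) \<le> ennreal (4 * \<epsilon>)" .
      have "cap \<P> p g = cap \<P> p (\<lambda>x. (g x - fs K x) + fs K x)" by (simp add: cap_fun_eq)
      also have "\<dots> \<le> cap \<P> p (\<lambda>x. g x - fs K x) + cap \<P> p (fs K)" using PP p by (rule cap_add)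
      also have "\<dots> \<le> ennreal \<epsilon> + ennreal (4 * \<epsilon>)" using add_mono[OF less_imp_le[OF K[OF order_refl]] cK] .
      also have "\<dots> = 0 + ennreal e" using \<epsilon> by (simp add: \<epsilon>_def ennreal_plus[symmetric] del: ennreal_plus)
      finally show "cap \<P> p g \<le> 0 + ennreal e" .
    qed simp
  qed
  then show ?thesis using M unfolding canon_class_def by blast
qed



definition wfun :: "'a::metric_space set \<Rightarrow> nat \<Rightarrow> 'a \<Rightarrow> real" where
  "wfun V k x = (if V = UNIV then 1 else min 1 (real k * infdist x (- V)))"

lemma wfun_bound: "\<bar>wfun V k x\<bar> \<le> 1"
  unfolding wfun_def by (auto simp: infdist_nonneg)

lemma wfun_Cb: "wfun V k \<in> Cb"
proof (rule Cb_I[where B=1])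
  show "continuous_on UNIV (wfun V k)"
    unfolding wfun_def by (cases "V = UNIV") (auto intro!: continuous_intros)
qed (rule wfun_bound)

lemma wfun_lim:
  assumes "open V"
  shows "(\<lambda>k. wfun V k x) \<longlonglongrightarrow> indicator V x"
proof (cases "V = UNIV")
  case True then show ?thesis by (simp add: wfun_def)
next
  case False
  show ?thesis
  proof (cases "x \<in> V")
    case True
    have d: "0 < infdist x (- V)"
      using assms False True by (intro infdist_pos_not_in_closed) auto
    obtain N :: nat where N: "1 / infdist x (- V) < N" using reals_Archimedean2 by blast
    have "eventually (\<lambda>k. wfun V k x = 1) sequentially"
    proof (rule eventually_sequentiallyI[of N])
      fix k assume "N \<le> k"
      then have "1 / infdist x (- V) < real k" using N by linarith
      then have "1 < real k * infdist x (- V)" using d by (simp add: field_simps)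
      then show "wfun V k x = 1" using False by (simp add: wfun_def)
    qed
    then have "(\<lambda>k. wfun V k x) \<longlonglongrightarrow> 1" by (rule tendsto_eventually)
    then show ?thesis using True by simp
  next
    case xV: False
    then have "wfun V k x = 0" for k using False by (simp add: wfun_def)
    then show ?thesis using xV by simp
  qed
qed

lemma space_bp: "borel_prob P \<Longrightarrow> space P = UNIV"
  using sets_eq_imp_space_eq[of P borel] by (simp add: borel_prob_def)

lemma int_wfun_lim:
  assumes P: "borel_prob P" and V: "open V"
  shows "(\<lambda>k. integral\<^sup>L P (wfun V k)) \<longlonglongrightarrow> measure P V"
proof -
  interpret prob_space P using P by (simp add: borel_prob_def)
  have sP: "sets P = sets borel" using P by (simp add: borel_prob_def)
  have VP: "V \<in> sets P" using V sP by simp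
  have "(\<lambda>k. integral\<^sup>L P (wfun V k)) \<longlonglongrightarrow> integral\<^sup>L P (indicator V :: 'a \<Rightarrow> real)"
  proof (rule integral_dominated_convergence[where w="\<lambda>x. 1"])
    show "(indicator V :: 'a \<Rightarrow> real) \<in> borel_measurable P" using VP by simp
    show "wfun V k \<in> borel_measurable P" for k using Cb_meas[OF wfun_Cb sP] .
    show "AE x in P. (\<lambda>k. wfun V k x) \<longlonglongrightarrow> indicator V x" using wfun_lim[OF V] by simp
    show "AE x in P. norm (wfun V k x) \<le> 1" for k using wfun_bound by (intro AE_I2) simp
  qed simp
  also have "integral\<^sup>L P (indicator V :: 'a \<Rightarrow> real) = measure P V" using space_bp[OF P] by simp
  finally show ?thesis .
qed

lemma uniq:
  fixes B :: "'a::metric_space set set"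
  assumes B: "topological_basis B" and P: "borel_prob P" and R: "borel_prob R"
    and eq: "\<And>F k. finite F \<Longrightarrow> F \<subseteq> B \<Longrightarrow> integral\<^sup>L P (wfun (\<Union>F) k) = integral\<^sup>L R (wfun (\<Union>F) k)"
    and cB: "countable B"
  shows "P = R"
proof -
  interpret P: prob_space P using P by (simp add: borel_prob_def)
  interpret R: prob_space R using R by (simp add: borel_prob_def)
  have sP: "sets P = sets borel" using P by (simp add: borel_prob_def)
  have sR: "sets R = sets borel" using R by (simp add: borel_prob_def)
  have mV: "measure P (\<Union>F) = measure R (\<Union>F)" if "finite F" "F \<subseteq> B" for F
  proof -
    have o: "open (\<Union>F)" using that B by (auto intro: topological_basis_open)
    have "(\<lambda>k. integral\<^sup>L R (wfun (\<Union>F) k)) \<longlonglongrightarrow> measure P (\<Union>F)"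
      using int_wfun_lim[OF P o] eq[OF that] by simp
    from LIMSEQ_unique[OF this int_wfun_lim[OF R o]] show ?thesis .
  qed
  have mU: "measure P U = measure R U" if U: "open U" for U
  proof -
    obtain C where C: "C \<subseteq> B" "\<Union>C = U" using B U unfolding topological_basis_def by blast
    show ?thesis
    proof (cases "C = {}")
      case True then show ?thesis using C by auto
    next
      case False
      have cC: "countable C" using cB C(1) by (rule countable_subset[rotated])
      define c where "c = from_nat_into C"
      have rc: "range c = C" unfolding c_def using False cC by simp
      define V where "V n = \<Union>(c ` {..n})" for n
      have Vfin: "finite (c ` {..n})" "c ` {..n} \<subseteq> B" for n using rc C(1) by auto
      have inc: "incseq V" unfolding V_def incseq_def by (intro allI impI Union_mono image_mono) auto
      have un: "(\<Union>n. V n) = U" unfolding V_def using rc C(2) by auto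
      have opV: "open (V n)" for n unfolding V_def using Vfin[of n] B by (auto intro: topological_basis_open)
      have rP: "range V \<subseteq> sets P" using opV sP by auto
      have rR: "range V \<subseteq> sets R" using opV sR by auto
      have "(\<lambda>n. measure P (V n)) \<longlonglongrightarrow> measure P U" using P.finite_Lim_measure_incseq[OF rP inc] un by simp
      moreover have "(\<lambda>n. measure R (V n)) \<longlonglongrightarrow> measure R U" using R.finite_Lim_measure_incseq[OF rR inc] un by simp
      moreover have "measure P (V n) = measure R (V n)" for n unfolding V_def using mV Vfin by auto
      ultimately have "(\<lambda>n. measure R (V n)) \<longlonglongrightarrow> measure P U" "(\<lambda>n. measure R (V n)) \<longlonglongrightarrow> measure R U" by simp_all
      from LIMSEQ_unique[OF this] show ?thesis .
    qed
  qed
  show ?thesis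
  proof (rule measure_eqI_generator_eq[where E="{U. open U}" and \<Omega>=UNIV and A="\<lambda>_. UNIV"])
    show "Int_stable {U :: 'a set. open U}" by (auto simp: Int_stable_def)
    show "sets P = sigma_sets UNIV {U. open U}" using sP sets_borel by simp
    show "sets R = sigma_sets UNIV {U. open U}" using sR sets_borel by simp
    fix X :: "'a set" assume "X \<in> {U. open U}"
    then show "emeasure P X = emeasure R X" using mU sP sR by (simp add: P.emeasure_eq_measure R.emeasure_eq_measure)
  qed auto
qed

lemma sep_subset:
  fixes S :: "'b::second_countable_topology set"
  obtains D where "countable D" "D \<subseteq> S" "S \<subseteq> closure D"
proof -
  obtain B2 :: "'b set set" where B2: "countable B2" "topological_basis B2" using ex_countable_basis by blast
  define D where "D = (\<lambda>b. SOME y. y \<in> b \<inter> S) ` {b\<in>B2. b \<inter> S \<noteq> {}}"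
  have "countable D" unfolding D_def using B2(1) by auto
  moreover have "D \<subseteq> S" unfolding D_def
  proof (rule image_subsetI)
    fix b assume "b \<in> {b \<in> B2. b \<inter> S \<noteq> {}}"
    then have "\<exists>y. y \<in> b \<inter> S" by auto
    from someI_ex[OF this] show "(SOME y. y \<in> b \<inter> S) \<in> S" by simp
  qed
  moreover have "S \<subseteq> closure D"
  proof
    fix x assume x: "x \<in> S"
    show "x \<in> closure D"
      unfolding closure_iff_nhds_not_empty
    proof (intro allI impI)
      fix A S' assume S': "S' \<subseteq> A" "open S'" "x \<in> S'"
      obtain b where b: "b \<in> B2" "x \<in> b" "b \<subseteq> S'" using topological_basisE[OF B2(2) S'(2,3)] by blast
      have ne: "b \<inter> S \<noteq> {}" using b x by auto
      define y where "y = (SOME y. y \<in> b \<inter> S)"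
      have "\<exists>y. y \<in> b \<inter> S" using ne by auto
      from someI_ex[OF this] have y: "y \<in> b \<inter> S" unfolding y_def .
      have "y \<in> D" unfolding D_def y_def using b ne by auto
      then show "D \<inter> A \<noteq> {}" using y b S' by auto
    qed
  qed
  ultimately show ?thesis using that by blast
qed

lemma exists_Q:
  fixes \<P> :: "'a::polish_space measure set"
  assumes PP: "\<forall>P\<in>\<P>. borel_prob P" and wrc: "weakly_rel_compact \<P>" and p: "1 \<le> p" and ne: "\<P> \<noteq> {}"
  obtains Q :: "nat \<Rightarrow> 'a measure" where "\<forall>n. Q n \<in> \<P>" "\<forall>\<phi>\<in>Cb. cap_Cb \<P> p \<phi> \<le> (SUP n. ennreal (nrm (Q n) p \<phi>))"
proof -
  have p0: "0 < p" using p by simp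
  obtain B :: "'a set set" where B: "countable B" "topological_basis B" using ex_countable_basis by blast
  define T where "T = (\<lambda>(F, k). wfun (\<Union>F) k) ` ({F. finite F \<and> F \<subseteq> B} \<times> (UNIV :: nat set))"
  have cT: "countable T" unfolding T_def using countable_Collect_finite_subset[OF B(1)] by auto
  have neT: "T \<noteq> {}" unfolding T_def by auto
  have TCb: "T \<subseteq> Cb" unfolding T_def using wfun_Cb by auto
  define t where "t = from_nat_into T"
  have rt: "range t = T" unfolding t_def using neT cT by simp
  define \<Phi> where "\<Phi> P = (\<lambda>j. integral\<^sup>L P (t j))" for P :: "'a measure"
  obtain D' where D': "countable D'" "D' \<subseteq> \<Phi> ` \<P>" "\<Phi> ` \<P> \<subseteq> closure D'" using sep_subset by blast
  define sel where "sel d = (SOME P. P \<in> \<P> \<and> \<Phi> P = d)" for d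
  have sel: "sel d \<in> \<P>" "\<Phi> (sel d) = d" if "d \<in> D'" for d
    using someI_ex[of "\<lambda>P. P \<in> \<P> \<and> \<Phi> P = d"] that D'(2) unfolding sel_def by blast+
  define D where "D = sel ` D'"
  have cD: "countable D" unfolding D_def using D'(1) by simp
  have DP: "D \<subseteq> \<P>" unfolding D_def using sel by auto
  have approx: "ennreal (nrm P p \<phi>) \<le> (SUP R\<in>D. ennreal (nrm R p \<phi>))" and neD0: "D \<noteq> {}"
    if P: "P \<in> \<P>" and \<phi>: "\<phi> \<in> Cb" for P \<phi>
  proof -
    have "\<Phi> P \<in> closure D'" using D'(3) P by auto
    then obtain x where x: "\<And>n. x n \<in> D'" "x \<longlonglongrightarrow> \<Phi> P" unfolding closure_sequential by blast
    define R where "R n = sel (x n)" for n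
    have RD: "R n \<in> D" for n unfolding R_def D_def using x(1) by auto
    have RP: "R n \<in> \<P>" for n using RD DP by auto
    have PhR: "\<Phi> (R n) = x n" for n unfolding R_def using sel x(1) by auto
    obtain r P' where r: "strict_mono r" "borel_prob P'" "weak_conv_meas (R \<circ> r) P'"
      using wrc RP unfolding weakly_rel_compact_def by blast
    have wc: "(\<lambda>n. integral\<^sup>L (R (r n)) f) \<longlonglongrightarrow> integral\<^sup>L P' f" if "f \<in> Cb" for f
      using r(3) that unfolding weak_conv_meas_def by auto
    have "integral\<^sup>L P' (t j) = integral\<^sup>L P (t j)" for j
    proof -
      have tj: "t j \<in> Cb" using rt TCb by auto
      have "(\<lambda>n. x n j) \<longlonglongrightarrow> \<Phi> P j"
        using continuous_on_tendsto_compose[OF continuous_on_product_coordinates[of j] x(2)] by simp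
      then have "(\<lambda>n. x (r n) j) \<longlonglongrightarrow> \<Phi> P j" using LIMSEQ_subseq_LIMSEQ[OF _ r(1)] by (simp add: o_def)
      moreover have "x n j = integral\<^sup>L (R n) (t j)" for n
        using fun_cong[OF PhR[of n, unfolded \<Phi>_def], of j] by simp
      ultimately have L: "(\<lambda>n. integral\<^sup>L (R (r n)) (t j)) \<longlonglongrightarrow> integral\<^sup>L P (t j)"
        by (simp add: \<Phi>_def)
      show ?thesis using LIMSEQ_unique[OF wc[OF tj] L] .
    qed
    then have "P' = P"
    proof (intro uniq[OF B(2) r(2) _ _ B(1)])
      show "borel_prob P" using PP P by auto
      fix F k assume "finite F" "F \<subseteq> B"
      then have "wfun (\<Union>F) k \<in> range t" unfolding rt T_def by auto
      then obtain j where "wfun (\<Union>F) k = t j" by auto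
      then show "integral\<^sup>L P' (wfun (\<Union>F) k) = integral\<^sup>L P (wfun (\<Union>F) k)"
        using \<open>\<And>j. integral\<^sup>L P' (t j) = integral\<^sup>L P (t j)\<close> by simp
    qed
    have "(\<lambda>n. integral\<^sup>L (R (r n)) (\<lambda>x. \<bar>\<phi> x\<bar> powr p)) \<longlonglongrightarrow> integral\<^sup>L P (\<lambda>x. \<bar>\<phi> x\<bar> powr p)"
      using wc[OF Cb_powr[OF \<phi> p0]] \<open>P' = P\<close> by simp
    then have "(\<lambda>n. nrm (R (r n)) p \<phi>) \<longlonglongrightarrow> nrm P p \<phi>"
      unfolding nrm_def using p0 by (intro tendsto_powr' tendsto_intros) (auto intro: int_pow_nonneg)
    then have lim: "(\<lambda>n. ennreal (nrm (R (r n)) p \<phi>)) \<longlonglongrightarrow> ennreal (nrm P p \<phi>)" by (rule tendsto_ennrealI)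
    show "ennreal (nrm P p \<phi>) \<le> (SUP R\<in>D. ennreal (nrm R p \<phi>))"
    proof (rule LIMSEQ_le_const2[OF lim], intro exI allI impI)
      fix n show "ennreal (nrm (R (r n)) p \<phi>) \<le> (SUP R\<in>D. ennreal (nrm R p \<phi>))"
        by (rule SUP_upper) (rule RD)
    qed
    show "D \<noteq> {}" using RD by auto
  qed
  obtain P0 where P0: "P0 \<in> \<P>" using ne by auto
  have neD: "D \<noteq> {}" using neD0[OF P0 Cb_const[of 0]] .
  define Q where "Q = from_nat_into D"
  have rQ: "range Q = D" unfolding Q_def using neD cD by simp
  show ?thesis
  proof (rule that[of Q])
    show "\<forall>n. Q n \<in> \<P>" using rQ DP by auto
    show "\<forall>\<phi>\<in>Cb. cap_Cb \<P> p \<phi> \<le> (SUP n. ennreal (nrm (Q n) p \<phi>))"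
    proof
      fix \<phi> :: "'a \<Rightarrow> real" assume \<phi>: "\<phi> \<in> Cb"
      have "(SUP R\<in>D. ennreal (nrm R p \<phi>)) = (SUP n. ennreal (nrm (Q n) p \<phi>))"
        unfolding rQ[symmetric] by (simp add: image_comp)
      moreover have "(SUP P\<in>\<P>. ennreal (nrm P p \<phi>)) \<le> (SUP R\<in>D. ennreal (nrm R p \<phi>))"
        by (rule SUP_least) (rule approx[OF _ \<phi>])
      ultimately show "cap_Cb \<P> p \<phi> \<le> (SUP n. ennreal (nrm (Q n) p \<phi>))"
        unfolding cap_Cb_eq by simp
    qed
  qed
qed



lemma ev_zero:
  fixes \<P> :: "'a::metric_space measure set"
  assumes PP: "\<forall>P\<in>\<P>. borel_prob P" and p: "1 \<le> p" and M: "\<mu> \<in> Mplus \<P> p" and g: "g \<in> L1cap \<P> p"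
    and c0: "cap \<P> p g = 0"
  shows "ext_val \<P> p \<mu> g = 0"
proof -
  have "(\<lambda>k. cap \<P> p (\<lambda>x. g x - (\<lambda>k x. 0) k x)) \<longlonglongrightarrow> 0" using c0 by simp
  from EV[OF PP p M g _ this] have "(\<lambda>k. integral\<^sup>L \<mu> ((\<lambda>k x. 0) k)) \<longlonglongrightarrow> ext_val \<P> p \<mu> g"
    by simp
  then have "(\<lambda>k. 0) \<longlonglongrightarrow> ext_val \<P> p \<mu> g" by simp
  from LIMSEQ_unique[OF tendsto_const this] show ?thesis by simp
qed

lemma empty_case:
  fixes \<P> :: "'a::metric_space measure set"
  assumes E: "\<P> = {}" and p: "1 \<le> p"
  shows "null_measure borel \<in> canon_class \<P> p"
proof -
  have PP: "\<forall>P\<in>\<P>. borel_prob P" using E by simp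
  have capCb0: "cap_Cb \<P> p \<psi> = 0" for \<psi> using E by (simp add: cap_Cb_def bot_ennreal)
  have cap0: "cap \<P> p g = 0" for g
  proof -
    have "cap \<P> p g \<le> cap_lsc \<P> p (\<lambda>x. \<infinity>)" by (rule cap_le_lsc[OF lsc_infty]) simp
    also have "\<dots> \<le> 0" unfolding cap_lsc_def by (rule SUP_least) (simp add: capCb0)
    finally show ?thesis by simp
  qed
  have bf: "borel_finite (null_measure (borel :: 'a measure))"
    unfolding borel_finite_def by (auto intro: finite_measureI)
  have M: "null_measure borel \<in> Mplus \<P> p"
    unfolding Mplus_def using bf by (auto intro: exI[of _ 0])
  show ?thesis
    unfolding canon_class_def using M ev_zero[OF PP p M _ cap0] cap0 by auto
qed

lemma canon_set:
  assumes "\<mu> \<in> canon_class \<P> p"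
  shows "{g\<in>L1cap \<P> p. L1nonneg \<P> p g \<and> ext_val \<P> p \<mu> g = 0} = {g\<in>L1cap \<P> p. L1nonneg \<P> p g \<and> cap \<P> p g = 0}"
  using assms unfolding canon_class_def by auto

lemma canon_from_set:
  assumes "\<nu> \<in> Mplus \<P> p"
    and "{g\<in>L1cap \<P> p. L1nonneg \<P> p g \<and> ext_val \<P> p \<nu> g = 0} = {g\<in>L1cap \<P> p. L1nonneg \<P> p g \<and> cap \<P> p g = 0}"
  shows "\<nu> \<in> canon_class \<P> p"
proof -
  have "ext_val \<P> p \<nu> g = 0 \<longleftrightarrow> cap \<P> p g = 0" if "g \<in> L1cap \<P> p" "L1nonneg \<P> p g" for g
    using assms(2) that by (simp add: set_eq_iff) (metis (mono_tags, lifting))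
  then show ?thesis using assms(1) unfolding canon_class_def by blast
qed

lemma Cb_L1:
  fixes \<P> :: "'a::metric_space measure set"
  assumes PP: "\<forall>P\<in>\<P>. borel_prob P" and p: "0 < p" and \<phi>: "\<phi> \<in> Cb"
  shows "\<phi> \<in> L1cap \<P> p"
proof -
  have "cap \<P> p \<phi> < \<infinity>" using cap_eq_Cb[OF PP \<phi> p] cap_Cb_fin[OF PP \<phi> p] by simp
  moreover have "cap \<P> p (\<lambda>x. \<phi> x - \<phi> x) = 0" using cap_zero[of \<P> p] by simp
  ultimately show ?thesis unfolding L1cap_def using \<phi> by (auto intro!: bexI[of _ \<phi>])
qed

lemma epowr_nrm:
  assumes Q: "borel_prob Q" and p: "0 < p" and \<phi>: "\<phi> \<in> Cb"
  shows "epowr (\<integral>\<^sup>+x. ennreal (\<bar>\<phi> x\<bar> powr p) \<partial>Q) (1 / p) = ennreal (nrm Q p \<phi>)"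
proof -
  have "(\<integral>\<^sup>+x. ennreal (\<bar>\<phi> x\<bar> powr p) \<partial>Q) = ennreal (\<integral>x. \<bar>\<phi> x\<bar> powr p \<partial>Q)"
    using nn_Cb[OF bp_bf[OF Q] Cb_powr[OF \<phi> p]] by simp
  then show ?thesis unfolding epowr_def nrm_def using int_pow_nonneg[where f=\<phi> and p=p and P=Q] by simp
qed

theorem theorem4p11:
  fixes \<P> :: "'a::polish_space measure set" and p :: real
  assumes "\<forall>P\<in>\<P>. borel_prob P"
    and "weakly_rel_compact \<P>"
    and "1 \<le> p"
  shows "canon_class \<P> p \<noteq> {}
    \<and> (\<exists>\<mu>\<in>Mplus \<P> p. canon_class \<P> p = {\<nu>\<in>Mplus \<P> p. Rcap \<P> p \<mu> \<nu>})
    \<and> (\<forall>(Q::nat \<Rightarrow> 'a measure) (\<alpha>::nat \<Rightarrow> real).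
          (\<forall>n. borel_prob (Q n))
        \<longrightarrow> (\<forall>g\<in>L1cap \<P> p. cap \<P> p g =
               (SUP n. epowr (\<integral>\<^sup>+x. ennreal (\<bar>g x\<bar> powr p) \<partial>Q n) (1 / p)))
        \<longrightarrow> (\<forall>n. 0 < \<alpha> n) \<longrightarrow> \<alpha> sums 1
        \<longrightarrow> mixture \<alpha> Q \<in> canon_class \<P> p)"
proof -
  note PP = assms(1) and p = assms(3)
  have p0: "0 < p" using p by simp
  obtain \<mu>0 where \<mu>0: "\<mu>0 \<in> canon_class \<P> p"
  proof (cases "\<P> = {}")
    case True
    then show ?thesis using that empty_case p by blast
  next
    case False
    obtain Q :: "nat \<Rightarrow> 'a measure" where Q: "\<forall>n. Q n \<in> \<P>" "\<forall>\<phi>\<in>Cb. cap_Cb \<P> p \<phi> \<le> (SUP n. ennreal (nrm (Q n) p \<phi>))"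
      using exists_Q[OF PP assms(2) p False] by blast
    define \<alpha> where "\<alpha> n = (1/2::real) ^ Suc n" for n
    have "mixture \<alpha> Q \<in> canon_class \<P> p"
    proof (rule core[OF PP p])
      show "\<forall>n. borel_prob (Q n)" using Q(1) PP by auto
      show "\<forall>n. 0 < \<alpha> n" unfolding \<alpha>_def by simp
      show "\<alpha> sums 1" unfolding \<alpha>_def by (rule power_half_series)
      show "\<forall>n. \<forall>\<phi>\<in>Cb. ennreal (nrm (Q n) p \<phi>) \<le> cap_Cb \<P> p \<phi>" using Q(1) by (auto intro: cap_Cb_ge)
      show "\<forall>\<phi>\<in>Cb. cap_Cb \<P> p \<phi> \<le> (SUP n. ennreal (nrm (Q n) p \<phi>))" by (rule Q(2))
    qed
    then show ?thesis using that by blast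
  qed
  have M0: "\<mu>0 \<in> Mplus \<P> p" using \<mu>0 by (simp add: canon_class_def)
  have part2: "canon_class \<P> p = {\<nu>\<in>Mplus \<P> p. Rcap \<P> p \<mu>0 \<nu>}"
  proof (intro set_eqI iffI)
    fix \<nu> assume \<nu>: "\<nu> \<in> canon_class \<P> p"
    then have "\<nu> \<in> Mplus \<P> p" by (simp add: canon_class_def)
    moreover have "Rcap \<P> p \<mu>0 \<nu>" unfolding Rcap_def using canon_set[OF \<mu>0] canon_set[OF \<nu>] by simp
    ultimately show "\<nu> \<in> {\<nu>\<in>Mplus \<P> p. Rcap \<P> p \<mu>0 \<nu>}" by simp
  next
    fix \<nu> assume "\<nu> \<in> {\<nu>\<in>Mplus \<P> p. Rcap \<P> p \<mu>0 \<nu>}"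
    then have \<nu>: "\<nu> \<in> Mplus \<P> p" "Rcap \<P> p \<mu>0 \<nu>" by auto
    show "\<nu> \<in> canon_class \<P> p"
      using canon_from_set[OF \<nu>(1)] \<nu>(2) canon_set[OF \<mu>0] unfolding Rcap_def by simp
  qed
  have part3: "mixture \<alpha> Q \<in> canon_class \<P> p"
    if Q: "\<forall>n. borel_prob (Q n)"
      and hc: "\<forall>g\<in>L1cap \<P> p. cap \<P> p g = (SUP n. epowr (\<integral>\<^sup>+x. ennreal (\<bar>g x\<bar> powr p) \<partial>Q n) (1 / p))"
      and a: "\<forall>n. 0 < \<alpha> n" "\<alpha> sums 1"
    for Q :: "nat \<Rightarrow> 'a measure" and \<alpha>
  proof -
    have eq: "cap_Cb \<P> p \<phi> = (SUP n. ennreal (nrm (Q n) p \<phi>))" if \<phi>: "\<phi> \<in> Cb" for \<phi>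
    proof -
      have "cap_Cb \<P> p \<phi> = cap \<P> p \<phi>" using cap_eq_Cb[OF PP \<phi> p0] by simp
      also have "\<dots> = (SUP n. epowr (\<integral>\<^sup>+x. ennreal (\<bar>\<phi> x\<bar> powr p) \<partial>Q n) (1 / p))"
        using hc Cb_L1[OF PP p0 \<phi>] by blast
      also have "\<dots> = (SUP n. ennreal (nrm (Q n) p \<phi>))"
        using epowr_nrm[OF _ p0 \<phi>] Q by simp
      finally show ?thesis .
    qed
    show ?thesis
    proof (rule core[OF PP p Q a])
      show "\<forall>n. \<forall>\<phi>\<in>Cb. ennreal (nrm (Q n) p \<phi>) \<le> cap_Cb \<P> p \<phi>"
        using eq by (auto intro: SUP_upper)
      show "\<forall>\<phi>\<in>Cb. cap_Cb \<P> p \<phi> \<le> (SUP n. ennreal (nrm (Q n) p \<phi>))" using eq by simp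
    qed
  qed
  show ?thesis
    using \<mu>0 M0 part2 part3 by blast
qed

end
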